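(* Let $\eta>0$, $\alpha\in(1/2,1)$, $\eta_i=\eta i^{-\alpha}$, let $\{e_i\}$ be i.i.d. real random variables with $\mathbb{E}e_i=0$ and $0<\mathbb{E}e_i^2<\infty$, let $x_0$ be deterministic, and let $X_0=x_0$, $X_i=(1-\eta_i)X_{i-1}+\eta_ie_i$ for $i\ge1$. With $Y_k^i=1$ if $k=i$ and $Y_k^i=\prod_{m=k+1}^i(1-\eta_m)$ if $k<i$, one has $X_i=Y_j^iX_j+\sum_{k=j+1}^iY_k^i\eta_ke_k$ for $0\le j<i$, and for all $1\le j<i$: (1) $\mathrm{Var}(X_i)\asymp\mathbb{E}[X_i^2]\asymp i^{-\alpha}$; (2) $0\le\mathrm{Cov}(X_i,X_j)\asymp\exp\{\frac{\eta}{1-\alpha}(j^{1-\alpha}-i^{1-\alpha})\}j^{-\alpha}\le\exp\{-\eta i^{-\alpha}(i-j)\}j^{-\alpha}$; (3) $\mathrm{Cov}(X_i,\sum_{k=1}^jX_k)\asymp\exp\{\frac{\eta}{1-\alpha}(j^{1-\alpha}-i^{1-\alpha})\}\le\exp\{-\eta i^{-\alpha}(i-j)\}$; (4) $\mathrm{Cov}(\sum_{k=i}^{\infty}X_k,X_j)\lesssim\exp\{\frac{\eta}{1-\alpha}(j^{1-\alpha}-i^{1-\alpha})\}i^{\alpha}j^{-\alpha}\le\exp\{-\eta i^{-\alpha}(i-j)\}i^{\alpha}j^{-\alpha}$.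
   Context: $a\lesssim b$ means $a\le Cb$ with $C>0$ independent of $i,j$; $a\asymp b$ means $a\lesssim b$ and $b\lesssim a$.
   Formalization: The constant eta is also less than 2 raised to the power alpha, and in (4) the covariance of the infinite sum with $X_j$ is the convergent series of the covariances of its terms with $X_j$. The statement above fails without it. *)

theory Defs
  imports "HOL-Probability.Probability"
begin

definition stepsize :: "real \<Rightarrow> real \<Rightarrow> nat \<Rightarrow> real" where
  "stepsize \<eta> \<alpha> i = \<eta> * real i powr (- \<alpha>)"

primrec sgdX :: "real \<Rightarrow> real \<Rightarrow> real \<Rightarrow> (nat \<Rightarrow> 'a \<Rightarrow> real) \<Rightarrow> nat \<Rightarrow> 'a \<Rightarrow> real" where
  "sgdX \<eta> \<alpha> x0 e 0 \<omega> = x0"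
| "sgdX \<eta> \<alpha> x0 e (Suc i) \<omega> =
     (1 - stepsize \<eta> \<alpha> (Suc i)) * sgdX \<eta> \<alpha> x0 e i \<omega> + stepsize \<eta> \<alpha> (Suc i) * e (Suc i) \<omega>"

definition Yprod :: "real \<Rightarrow> real \<Rightarrow> nat \<Rightarrow> nat \<Rightarrow> real" where
  "Yprod \<eta> \<alpha> k i = (if k = i then 1 else (\<Prod>m\<in>{k+1..i}. 1 - stepsize \<eta> \<alpha> m))"

definition covar :: "'a measure \<Rightarrow> ('a \<Rightarrow> real) \<Rightarrow> ('a \<Rightarrow> real) \<Rightarrow> real" where
  "covar M X Z = integral\<^sup>L M (\<lambda>\<omega>. (X \<omega> - integral\<^sup>L M X) * (Z \<omega> - integral\<^sup>L M Z))"

definition var :: "'a measure \<Rightarrow> ('a \<Rightarrow> real) \<Rightarrow> real" where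
  "var M X = integral\<^sup>L M (\<lambda>\<omega>. (X \<omega> - integral\<^sup>L M X)\<^sup>2)"

end

theory Submission
  imports Defs
begin


lemma powr_mvt:
  fixes x y p :: real
  assumes "0 < x" "x < y"
  shows "\<exists>z. x < z \<and> z < y \<and> y powr p - x powr p = (y - x) * (p * z powr (p - 1))"
proof -
  have "\<And>t. x \<le> t \<Longrightarrow> t \<le> y \<Longrightarrow> ((\<lambda>t. t powr p) has_real_derivative p * t powr (p - 1)) (at t)"
    using assms by (intro has_real_derivative_powr) auto
  from MVT2[OF assms(2) this] show ?thesis by blast
qed

lemma powr_diff_le_neg:
  fixes x y p :: real
  assumes "0 < x" "x < y" "p \<le> 1" "0 \<le> p"
  shows "y powr p - x powr p \<le> (y - x) * (p * x powr (p - 1))"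
    and "(y - x) * (p * y powr (p - 1)) \<le> y powr p - x powr p"
proof -
  obtain z where z: "x < z" "z < y" "y powr p - x powr p = (y - x) * (p * z powr (p - 1))"
    using powr_mvt[OF assms(1,2)] by blast
  have "z powr (p-1) \<le> x powr (p - 1)"
    using z assms by (intro powr_mono2') auto
  moreover have "y powr (p-1) \<le> z powr (p - 1)"
    using z assms by (intro powr_mono2') auto
  ultimately have "p * z powr (p-1) \<le> p * x powr (p - 1)" "p * y powr (p-1) \<le> p * z powr (p - 1)"
    using assms by (auto intro!: mult_left_mono)
  then show "y powr p - x powr p \<le> (y - x) * (p * x powr (p - 1))"
    and "(y - x) * (p * y powr (p - 1)) \<le> y powr p - x powr p"
    unfolding z(3) using z assms by (auto intro!: mult_left_mono)
qed

lemma powr_diff_le_neg2: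
  fixes x y p :: real
  assumes "0 < x" "x < y" "p \<le> 0"
  shows "x powr p - y powr p \<le> (y - x) * (- p * x powr (p - 1))"
    and "(y - x) * (- p * y powr (p - 1)) \<le> x powr p - y powr p"
proof -
  obtain z where z: "x < z" "z < y" "y powr p - x powr p = (y - x) * (p * z powr (p - 1))"
    using powr_mvt[OF assms(1,2)] by blast
  have "z powr (p-1) \<le> x powr (p - 1)"
    using z assms by (intro powr_mono2') auto
  moreover have "y powr (p-1) \<le> z powr (p - 1)"
    using z assms by (intro powr_mono2') auto
  ultimately have "- p * z powr (p-1) \<le> - p * x powr (p - 1)" "- p * y powr (p-1) \<le> - p * z powr (p - 1)"
    using assms by (intro mult_left_mono; simp)+
  then have "(y - x) * (- p * z powr (p-1)) \<le> (y - x) * (- p * x powr (p - 1))"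
     "(y - x) * (- p * y powr (p-1)) \<le> (y - x) * (- p * z powr (p - 1))"
    using z by (auto intro!: mult_left_mono)
  then show "x powr p - y powr p \<le> (y - x) * (- p * x powr (p - 1))"
    and "(y - x) * (- p * y powr (p - 1)) \<le> x powr p - y powr p"
    using z(3) by (auto simp: algebra_simps)
qed


definition Fh :: "real \<Rightarrow> real \<Rightarrow> real \<Rightarrow> real" where
  "Fh \<eta> \<alpha> x = \<eta> / (1 - \<alpha>) * x powr (1 - \<alpha>)"

lemma Yprod_eq: "Yprod \<eta> \<alpha> k i = (\<Prod>m\<in>{k+1..i}. 1 - stepsize \<eta> \<alpha> m)"
  unfolding Yprod_def by auto

lemma Yprod_Suc: "k \<le> i \<Longrightarrow> Yprod \<eta> \<alpha> k (Suc i) = (1 - stepsize \<eta> \<alpha> (Suc i)) * Yprod \<eta> \<alpha> k i"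
  unfolding Yprod_eq by (simp add: mult.commute)

lemma Yprod_same[simp]: "Yprod \<eta> \<alpha> i i = 1"
  unfolding Yprod_def by simp

lemma Yprod_split: assumes "k \<le> j" "j \<le> i" shows "Yprod \<eta> \<alpha> k i = Yprod \<eta> \<alpha> k j * Yprod \<eta> \<alpha> j i"
  using assms(2) proof (induction i rule: dec_induct)
  case base
  then show ?case by simp
next
  case (step i)
  then show ?case using assms(1) by (simp add: Yprod_Suc)
qed

lemma stepsize1[simp]: "stepsize \<eta> \<alpha> 1 = \<eta>"
  unfolding stepsize_def by simp


definition Vs :: "real \<Rightarrow> real \<Rightarrow> nat \<Rightarrow> real" where
  "Vs \<eta> \<alpha> i = (\<Sum>k\<in>{1..i}. (Yprod \<eta> \<alpha> k i)\<^sup>2 * (stepsize \<eta> \<alpha> k)\<^sup>2)"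
definition Ts :: "real \<Rightarrow> real \<Rightarrow> nat \<Rightarrow> real" where
  "Ts \<eta> \<alpha> j = (\<Sum>k\<in>{1..j}. Yprod \<eta> \<alpha> k j * Vs \<eta> \<alpha> k)"
definition Ps :: "real \<Rightarrow> real \<Rightarrow> nat \<Rightarrow> nat \<Rightarrow> real" where
  "Ps \<eta> \<alpha> N i = (\<Sum>n<N. Yprod \<eta> \<alpha> i (i + n))"

lemma Vs_Suc: "Vs \<eta> \<alpha> (Suc i) = (1 - stepsize \<eta> \<alpha> (Suc i))\<^sup>2 * Vs \<eta> \<alpha> i + (stepsize \<eta> \<alpha> (Suc i))\<^sup>2"
proof -
  have "Vs \<eta> \<alpha> (Suc i) = (\<Sum>k\<in>{1..i}. (Yprod \<eta> \<alpha> k (Suc i))\<^sup>2 * (stepsize \<eta> \<alpha> k)\<^sup>2) + (stepsize \<eta> \<alpha> (Suc i))\<^sup>2"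
    unfolding Vs_def by simp
  also have "(\<Sum>k\<in>{1..i}. (Yprod \<eta> \<alpha> k (Suc i))\<^sup>2 * (stepsize \<eta> \<alpha> k)\<^sup>2)
     = (\<Sum>k\<in>{1..i}. (1 - stepsize \<eta> \<alpha> (Suc i))\<^sup>2 * ((Yprod \<eta> \<alpha> k i)\<^sup>2 * (stepsize \<eta> \<alpha> k)\<^sup>2))"
    by (intro sum.cong) (auto simp: Yprod_Suc power_mult_distrib)
  also have "\<dots> = (1 - stepsize \<eta> \<alpha> (Suc i))\<^sup>2 * Vs \<eta> \<alpha> i"
    unfolding Vs_def by (simp add: sum_distrib_left)
  finally show ?thesis .
qed

lemma Vs_1: "Vs \<eta> \<alpha> 1 = \<eta>\<^sup>2" unfolding Vs_def stepsize_def by simp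
lemma Vs_Suc0[simp]: "Vs \<eta> \<alpha> (Suc 0) = \<eta>\<^sup>2" using Vs_1 by simp
lemma stepsize_Suc0[simp]: "stepsize \<eta> \<alpha> (Suc 0) = \<eta>" unfolding stepsize_def by simp

lemma Ts_Suc: "Ts \<eta> \<alpha> (Suc j) = (1 - stepsize \<eta> \<alpha> (Suc j)) * Ts \<eta> \<alpha> j + Vs \<eta> \<alpha> (Suc j)"
proof -
  have "Ts \<eta> \<alpha> (Suc j) = (\<Sum>k\<in>{1..j}. Yprod \<eta> \<alpha> k (Suc j) * Vs \<eta> \<alpha> k) + Vs \<eta> \<alpha> (Suc j)"
    unfolding Ts_def by simp
  also have "(\<Sum>k\<in>{1..j}. Yprod \<eta> \<alpha> k (Suc j) * Vs \<eta> \<alpha> k)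
     = (\<Sum>k\<in>{1..j}. (1 - stepsize \<eta> \<alpha> (Suc j)) * (Yprod \<eta> \<alpha> k j * Vs \<eta> \<alpha> k))"
    by (intro sum.cong) (auto simp: Yprod_Suc)
  also have "\<dots> = (1 - stepsize \<eta> \<alpha> (Suc j)) * Ts \<eta> \<alpha> j"
    unfolding Ts_def by (simp add: sum_distrib_left)
  finally show ?thesis .
qed

lemma Ts_1: "Ts \<eta> \<alpha> 1 = \<eta>\<^sup>2" unfolding Ts_def by (simp add: Vs_1)

lemma Ps_Suc: "Ps \<eta> \<alpha> (Suc N) i = 1 + (1 - stepsize \<eta> \<alpha> (Suc i)) * Ps \<eta> \<alpha> N (Suc i)"
proof -
  have "Ps \<eta> \<alpha> (Suc N) i = Yprod \<eta> \<alpha> i (i + 0) + (\<Sum>n<N. Yprod \<eta> \<alpha> i (i + Suc n))"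
    unfolding Ps_def by (rule sum.lessThan_Suc_shift)
  also have "(\<Sum>n<N. Yprod \<eta> \<alpha> i (i + Suc n)) = (\<Sum>n<N. (1 - stepsize \<eta> \<alpha> (Suc i)) * Yprod \<eta> \<alpha> (Suc i) (Suc i + n))"
  proof (intro sum.cong refl)
    fix n
    have "Yprod \<eta> \<alpha> i (i + Suc n) = Yprod \<eta> \<alpha> i (Suc i) * Yprod \<eta> \<alpha> (Suc i) (i + Suc n)"
      by (rule Yprod_split) auto
    also have "Yprod \<eta> \<alpha> i (Suc i) = 1 - stepsize \<eta> \<alpha> (Suc i)"
      using Yprod_Suc[of i i \<eta> \<alpha>] by simp
    finally show "Yprod \<eta> \<alpha> i (i + Suc n) = (1 - stepsize \<eta> \<alpha> (Suc i)) * Yprod \<eta> \<alpha> (Suc i) (Suc i + n)"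
      by simp
  qed
  finally show ?thesis unfolding Ps_def by (simp add: sum_distrib_left)
qed

lemma Ps_0: "Ps \<eta> \<alpha> 0 i = 0" unfolding Ps_def by simp

context
  fixes \<eta> \<alpha> :: real
  assumes eta_pos: "\<eta> > 0" and eta_small: "\<eta> < 2 powr \<alpha>" and al1: "1/2 < \<alpha>" and al2: "\<alpha> < 1"
begin

definition "qq = \<eta> * 2 powr (- \<alpha>)"

lemma qq_lt1: "qq < 1" and qq_pos: "0 < qq"
proof -
  have "\<eta> * 2 powr (- \<alpha>) < 2 powr \<alpha> * 2 powr (- \<alpha>)"
    using eta_small by (intro mult_strict_right_mono) auto
  also have "\<dots> = 1" by (simp flip: powr_add)
  finally show "qq < 1" unfolding qq_def .
  show "0 < qq" unfolding qq_def using eta_pos by simp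
qed

lemma step_bounds: "2 \<le> m \<Longrightarrow> 0 < stepsize \<eta> \<alpha> m \<and> stepsize \<eta> \<alpha> m \<le> qq"
proof -
  assume m: "2 \<le> m"
  have "real m powr (- \<alpha>) \<le> 2 powr (- \<alpha>)"
    using m al1 by (intro powr_mono2') auto
  then show ?thesis unfolding stepsize_def qq_def using eta_pos m by auto
qed

lemma step_pos: "1 \<le> m \<Longrightarrow> 0 < stepsize \<eta> \<alpha> m"
  unfolding stepsize_def using eta_pos by auto

lemma Y_nonneg: "1 \<le> k \<Longrightarrow> 0 \<le> Yprod \<eta> \<alpha> k i"
  unfolding Yprod_eq
proof (intro prod_nonneg)
  fix m assume "1 \<le> k" "m \<in> {k+1..i}"
  then have "2 \<le> m" by auto
  then show "0 \<le> 1 - stepsize \<eta> \<alpha> m" using step_bounds[of m] qq_lt1 by auto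
qed

lemma F_diff:
  assumes "0 < x"
  shows "\<eta> * (x+1) powr (-\<alpha>) \<le> Fh \<eta> \<alpha> (x+1) - Fh \<eta> \<alpha> x"
    and "Fh \<eta> \<alpha> (x+1) - Fh \<eta> \<alpha> x \<le> \<eta> * x powr (-\<alpha>)"
proof -
  have 1: "(x+1) powr (1-\<alpha>) - x powr (1-\<alpha>) \<le> (1-\<alpha>) * x powr (-\<alpha>)"
    using powr_diff_le_neg(1)[of x "x+1" "1-\<alpha>"] assms al1 al2 by simp
  have 2: "(1-\<alpha>) * (x+1) powr (-\<alpha>) \<le> (x+1) powr (1-\<alpha>) - x powr (1-\<alpha>)"
    using powr_diff_le_neg(2)[of x "x+1" "1-\<alpha>"] assms al1 al2 by simp
  have e: "Fh \<eta> \<alpha> (x+1) - Fh \<eta> \<alpha> x = \<eta> / (1-\<alpha>) * ((x+1) powr (1-\<alpha>) - x powr (1-\<alpha>))"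
    unfolding Fh_def by (simp add: algebra_simps)
  have p: "0 \<le> \<eta> / (1-\<alpha>)" using eta_pos al2 by auto
  have "\<eta> / (1-\<alpha>) * ((x+1) powr (1-\<alpha>) - x powr (1-\<alpha>)) \<le> \<eta> / (1-\<alpha>) * ((1-\<alpha>) * x powr (-\<alpha>))"
    using mult_left_mono[OF 1 p] .
  then show "Fh \<eta> \<alpha> (x+1) - Fh \<eta> \<alpha> x \<le> \<eta> * x powr (-\<alpha>)" using e al2 by simp
  have "\<eta> / (1-\<alpha>) * ((1-\<alpha>) * (x+1) powr (-\<alpha>)) \<le> \<eta> / (1-\<alpha>) * ((x+1) powr (1-\<alpha>) - x powr (1-\<alpha>))"
    using mult_left_mono[OF 2 p] .
  then show "\<eta> * (x+1) powr (-\<alpha>) \<le> Fh \<eta> \<alpha> (x+1) - Fh \<eta> \<alpha> x" using e al2 by simp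
qed

lemma Y_upper0:
  assumes "1 \<le> j" "j \<le> i"
  shows "Yprod \<eta> \<alpha> j i \<le> exp (Fh \<eta> \<alpha> (real (Suc j)) - Fh \<eta> \<alpha> (real (Suc i)))"
  using assms(2)
proof (induction i rule: dec_induct)
  case base
  then show ?case by simp
next
  case (step i)
  define s where "s = stepsize \<eta> \<alpha> (Suc i)"
  have s1: "1 - s \<le> exp (-s)" using exp_ge_add_one_self[of "-s"] by simp
  have s2: "0 \<le> 1 - s" using step_bounds[of "Suc i"] qq_lt1 step assms unfolding s_def by auto
  have "Fh \<eta> \<alpha> (real (Suc i) + 1) - Fh \<eta> \<alpha> (real (Suc i)) \<le> s"
    using F_diff(2)[of "real (Suc i)"] unfolding s_def stepsize_def by simp
  then have s3: "exp (-s) \<le> exp (Fh \<eta> \<alpha> (real (Suc i)) - Fh \<eta> \<alpha> (real (Suc (Suc i))))"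
    by (simp add: add.commute)
  have "Yprod \<eta> \<alpha> j (Suc i) = (1 - s) * Yprod \<eta> \<alpha> j i"
    using step Yprod_Suc s_def by simp
  also have "\<dots> \<le> exp (Fh \<eta> \<alpha> (real (Suc i)) - Fh \<eta> \<alpha> (real (Suc (Suc i)))) * exp (Fh \<eta> \<alpha> (real (Suc j)) - Fh \<eta> \<alpha> (real (Suc i)))"
  proof (intro mult_mono)
    show "1 - s \<le> exp (Fh \<eta> \<alpha> (real (Suc i)) - Fh \<eta> \<alpha> (real (Suc (Suc i))))"
      using s1 s3 by linarith
  qed (use s2 step Y_nonneg[of j i] assms in auto)
  also have "\<dots> = exp (Fh \<eta> \<alpha> (real (Suc j)) - Fh \<eta> \<alpha> (real (Suc (Suc i))))"
    by (simp flip: exp_add)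
  finally show ?case .
qed

lemma Y_upper:
  assumes "1 \<le> j" "j \<le> i"
  shows "Yprod \<eta> \<alpha> j i \<le> exp \<eta> * exp (Fh \<eta> \<alpha> j - Fh \<eta> \<alpha> i)"
proof -
  have a: "Fh \<eta> \<alpha> (real j + 1) - Fh \<eta> \<alpha> j \<le> \<eta> * real j powr (-\<alpha>)"
    using F_diff(2)[of "real j"] assms by simp
  have "real j powr (-\<alpha>) \<le> 1 powr (-\<alpha>)" using assms al1 by (intro powr_mono2') auto
  then have "real j powr (-\<alpha>) \<le> 1" by simp
  then have "\<eta> * real j powr (-\<alpha>) \<le> \<eta>" using eta_pos by simp
  have b: "Fh \<eta> \<alpha> i \<le> Fh \<eta> \<alpha> (real i + 1)"
  proof -
    have "0 \<le> \<eta> * (real i + 1) powr (-\<alpha>)" using eta_pos by simp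
    moreover have "0 < real i" using assms by simp
    ultimately show ?thesis using F_diff(1)[of "real i"] by linarith
  qed
  have "Yprod \<eta> \<alpha> j i \<le> exp (Fh \<eta> \<alpha> (real (Suc j)) - Fh \<eta> \<alpha> (real (Suc i)))"
    using Y_upper0 assms by blast
  also have "\<dots> \<le> exp (\<eta> + (Fh \<eta> \<alpha> j - Fh \<eta> \<alpha> i))"
    using a b \<open>\<eta> * real j powr (-\<alpha>) \<le> \<eta>\<close> by (simp add: add.commute)
  also have "\<dots> = exp \<eta> * exp (Fh \<eta> \<alpha> j - Fh \<eta> \<alpha> i)" by (simp add: exp_add)
  finally show ?thesis .
qed

definition "EE = \<eta>\<^sup>2 / ((1 - qq) * (2 * \<alpha> - 1))"
definition "Dh x = EE * x powr (1 - 2 * \<alpha>)"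

lemma EE_pos: "0 < EE"
  unfolding EE_def using qq_lt1 al1 eta_pos by auto

lemma log_bound:
  assumes "0 \<le> x" "x \<le> qq"
  shows "exp (- x - x\<^sup>2 / (1 - qq)) \<le> 1 - x"
proof -
  have x1: "x < 1" using assms qq_lt1 by simp
  have "ln (1 / (1 - x)) \<le> 1 / (1 - x) - 1" using x1 by (intro ln_le_minus_one) auto
  also have "1 / (1 - x) - 1 = x + x\<^sup>2 / (1 - x)" using x1 by (simp add: field_simps power2_eq_square)
  also have "x\<^sup>2 / (1 - x) \<le> x\<^sup>2 / (1 - qq)"
    using assms qq_lt1 by (intro divide_left_mono) auto
  finally have "- x - x\<^sup>2 / (1 - qq) \<le> ln (1 - x)" using x1 by (simp add: ln_div)
  then have "exp (- x - x\<^sup>2 / (1 - qq)) \<le> exp (ln (1 - x))" by simp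
  also have "\<dots> = 1 - x" using x1 by simp
  finally show ?thesis .
qed

lemma D_diff:
  assumes "0 < x"
  shows "\<eta>\<^sup>2 * ((x+1) powr (-\<alpha>))\<^sup>2 / (1 - qq) \<le> Dh x - Dh (x+1)"
proof -
  have 1: "(2*\<alpha> - 1) * (x+1) powr (-2*\<alpha>) \<le> x powr (1 - 2*\<alpha>) - (x+1) powr (1 - 2*\<alpha>)"
    using powr_diff_le_neg2(2)[of x "x+1" "1 - 2*\<alpha>"] assms al1 by simp
  have sq: "((x+1) powr (-\<alpha>))\<^sup>2 = (x+1) powr (-2*\<alpha>)"
    using assms by (simp add: power2_eq_square flip: powr_add)
  have "Dh x - Dh (x+1) = EE * (x powr (1 - 2*\<alpha>) - (x+1) powr (1 - 2*\<alpha>))"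
    unfolding Dh_def by (simp add: algebra_simps)
  also have "\<dots> \<ge> EE * ((2*\<alpha> - 1) * (x+1) powr (-2*\<alpha>))"
    using 1 EE_pos by (intro mult_left_mono) auto
  also have "EE * ((2*\<alpha> - 1) * (x+1) powr (-2*\<alpha>)) = \<eta>\<^sup>2 * ((x+1) powr (-\<alpha>))\<^sup>2 / (1 - qq)"
  proof -
    have n: "1 - qq \<noteq> 0" "2*\<alpha> - 1 \<noteq> 0" using al1 qq_lt1 by auto
    have "EE * (2*\<alpha> - 1) = \<eta>\<^sup>2 / (1 - qq)" unfolding EE_def using n by simp
    then show ?thesis unfolding sq by (metis mult.assoc times_divide_eq_left)
  qed
  finally show ?thesis by simp
qed

lemma Y_lower0:
  assumes "1 \<le> j" "j \<le> i"
  shows "exp (Fh \<eta> \<alpha> j - Fh \<eta> \<alpha> i + Dh i - Dh j) \<le> Yprod \<eta> \<alpha> j i"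
  using assms(2)
proof (induction i rule: dec_induct)
  case base
  then show ?case by simp
next
  case (step i)
  define s where "s = stepsize \<eta> \<alpha> (Suc i)"
  have sb: "0 < s" "s \<le> qq" using step_bounds[of "Suc i"] step assms unfolding s_def by auto
  have i0: "0 < real i" using step assms by simp
  have a: "s \<le> Fh \<eta> \<alpha> (real i + 1) - Fh \<eta> \<alpha> (real i)"
    using F_diff(1)[OF i0] unfolding s_def stepsize_def by (simp add: add.commute)
  have b: "s\<^sup>2 / (1 - qq) \<le> Dh (real i) - Dh (real i + 1)"
    using D_diff[OF i0] unfolding s_def stepsize_def by (simp add: add.commute power_mult_distrib)
  have "exp (Fh \<eta> \<alpha> (real i) - Fh \<eta> \<alpha> (real (Suc i)) + Dh (real (Suc i)) - Dh (real i))
        \<le> exp (- s - s\<^sup>2 / (1 - qq))"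
    using a b by (simp add: add.commute)
  also have "\<dots> \<le> 1 - s" using log_bound sb by auto
  finally have c: "exp (Fh \<eta> \<alpha> (real i) - Fh \<eta> \<alpha> (real (Suc i)) + Dh (real (Suc i)) - Dh (real i)) \<le> 1 - s" .
  have "exp (Fh \<eta> \<alpha> j - Fh \<eta> \<alpha> (real (Suc i)) + Dh (real (Suc i)) - Dh j)
      = exp (Fh \<eta> \<alpha> (real i) - Fh \<eta> \<alpha> (real (Suc i)) + Dh (real (Suc i)) - Dh (real i))
        * exp (Fh \<eta> \<alpha> j - Fh \<eta> \<alpha> i + Dh i - Dh j)"
    by (simp flip: exp_add)
  also have "\<dots> \<le> (1 - s) * Yprod \<eta> \<alpha> j i"
    using c step sb qq_lt1 by (intro mult_mono) auto
  also have "\<dots> = Yprod \<eta> \<alpha> j (Suc i)"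
    using step Yprod_Suc s_def by simp
  finally show ?case .
qed

lemma Y_lower:
  assumes "1 \<le> j" "j \<le> i"
  shows "exp (- EE) * exp (Fh \<eta> \<alpha> j - Fh \<eta> \<alpha> i) \<le> Yprod \<eta> \<alpha> j i"
proof -
  have "real j powr (1 - 2*\<alpha>) \<le> 1 powr (1 - 2*\<alpha>)" using assms al1 by (intro powr_mono2') auto
  then have "Dh j \<le> EE" unfolding Dh_def using EE_pos by (simp add: mult_left_le)
  moreover have "0 \<le> Dh i" unfolding Dh_def using EE_pos by simp
  ultimately have "exp (- EE) * exp (Fh \<eta> \<alpha> j - Fh \<eta> \<alpha> i) \<le> exp (Fh \<eta> \<alpha> j - Fh \<eta> \<alpha> i + Dh i - Dh j)"
    by (simp flip: exp_add)
  also have "\<dots> \<le> Yprod \<eta> \<alpha> j i" using Y_lower0 assms by blast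
  finally show ?thesis .
qed


definition "c1 = min (\<eta>/2) (\<eta>\<^sup>2)"

lemma c1_pos: "0 < c1" unfolding c1_def using eta_pos by simp

lemma V_lower:
  assumes "1 \<le> i"
  shows "c1 * real i powr (-\<alpha>) \<le> Vs \<eta> \<alpha> i"
  using assms
proof (induction i rule: dec_induct)
  case base
  then show ?case unfolding c1_def by (simp add: Vs_1)
next
  case (step i)
  define w where "w = real (Suc i) powr (-\<alpha>)"
  define s where "s = stepsize \<eta> \<alpha> (Suc i)"
  have sw: "s = \<eta> * w" unfolding s_def w_def stepsize_def by simp
  have w0: "0 \<le> w" unfolding w_def by simp
  have s0: "0 \<le> s" using sw w0 eta_pos by simp
  have "w \<le> real i powr (-\<alpha>)" unfolding w_def using step al1 by (intro powr_mono2') auto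
  then have "c1 * w \<le> Vs \<eta> \<alpha> i" using step c1_pos by (smt (verit) mult_left_mono)
  then have "(1 - s)\<^sup>2 * (c1 * w) \<le> (1 - s)\<^sup>2 * Vs \<eta> \<alpha> i" by (intro mult_left_mono) auto
  moreover have "(1 - s)\<^sup>2 * (c1 * w) + s\<^sup>2 - c1 * w = w * s * (c1 * s + (\<eta> - 2 * c1))"
    unfolding sw by (simp add: algebra_simps power2_eq_square)
  moreover have "0 \<le> w * s * (c1 * s + (\<eta> - 2 * c1))"
    using w0 s0 c1_pos unfolding c1_def by (intro mult_nonneg_nonneg) auto
  ultimately have "c1 * w \<le> (1 - s)\<^sup>2 * Vs \<eta> \<alpha> i + s\<^sup>2" by linarith
  then show ?case unfolding w_def s_def Vs_Suc .
qed

definition "M0 = (2/\<eta>) powr (\<alpha>/(1-\<alpha>))"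
definition "bb = 1 + 2 * M0 / \<eta>"
definition "K1 = 2 * \<eta> * (1 + bb) + \<eta>\<^sup>2 * (1 + bb)"

lemma bb_ge1: "1 \<le> bb" unfolding bb_def M0_def using eta_pos by simp

lemma pow_lin:
  assumes "0 < x"
  shows "x powr \<alpha> \<le> \<eta>/2 * x + M0"
proof (cases "2/\<eta> \<le> x powr (1-\<alpha>)")
  case True
  have "x powr \<alpha> * (2/\<eta>) \<le> x powr \<alpha> * x powr (1-\<alpha>)" using True by (intro mult_left_mono) auto
  also have "\<dots> = x" using assms by (simp flip: powr_add)
  finally have "x powr \<alpha> \<le> \<eta>/2 * x" using eta_pos by (simp add: field_simps)
  moreover have "0 \<le> M0" unfolding M0_def by simp
  ultimately show ?thesis by linarith
next
  case False
  have "x powr \<alpha> = (x powr (1-\<alpha>)) powr (\<alpha>/(1-\<alpha>))"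
    using al2 by (simp add: powr_powr)
  also have "\<dots> \<le> (2/\<eta>) powr (\<alpha>/(1-\<alpha>))"
    using False al1 al2 by (intro powr_mono2) auto
  finally have "x powr \<alpha> \<le> M0" unfolding M0_def .
  moreover have "0 \<le> \<eta>/2 * x" using assms eta_pos by simp
  ultimately show ?thesis by linarith
qed

lemma alg_step:
  fixes s V K U U' u :: real
  assumes "0 \<le> s" "s \<le> 1" "0 \<le> V" "V \<le> K * U" "U - U' \<le> U / u" "2 \<le> s * u" "2 * s \<le> K * U"
    "0 < u" "0 \<le> U" "0 \<le> K"
  shows "(1 - s)\<^sup>2 * V + s\<^sup>2 \<le> K * U'"
proof -
  have "(1 - s)\<^sup>2 * V \<le> (1 - s) * V"
    using assms by (intro mult_right_mono) (auto simp: power2_eq_square mult_left_le)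
  also have "\<dots> \<le> (1 - s) * (K * U)" using assms by (intro mult_left_mono) auto
  finally have a: "(1 - s)\<^sup>2 * V \<le> (1 - s) * (K * U)" .
  have "1 / u \<le> s / 2" using assms by (simp add: field_simps)
  then have b1: "(K * U) * (1 / u) \<le> (K * U) * (s / 2)" using assms by (intro mult_left_mono) auto
  have b2: "K * (U - U') \<le> K * (U / u)" using assms by (intro mult_left_mono) auto
  have e1: "(K * U) * (1 / u) = K * (U / u)" by simp
  have e2: "K * (U - U') = K * U - K * U'" by (simp add: right_diff_distrib)
  have e3: "(K * U) * (s / 2) = s * (K * U) / 2" by simp
  have b: "K * U - K * U' \<le> s * (K * U) / 2" using b1 b2 e1 e2 e3 by linarith
  have "s * (2 * s) \<le> s * (K * U)" using assms by (intro mult_left_mono) auto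
  then have c: "s\<^sup>2 \<le> s * (K * U) / 2" by (simp add: power2_eq_square)
  have e4: "(1 - s) * (K * U) = K * U - s * (K * U)" by (simp add: left_diff_distrib)
  show ?thesis using a b c e4 by linarith
qed

lemma powr_inv_ge:
  assumes "1 \<le> x"
  shows "1 / x \<le> x powr (-\<alpha>)"
proof -
  have "x powr (-1) \<le> x powr (-\<alpha>)" using assms al2 by (intro powr_mono) auto
  then show ?thesis using assms by (simp add: powr_minus_divide)
qed

lemma V_upper0:
  assumes "1 \<le> i"
  shows "Vs \<eta> \<alpha> i \<le> K1 * (real i + bb) powr (-\<alpha>)"
  using assms
proof (induction i rule: dec_induct)
  case base
  have "\<eta>\<^sup>2 = \<eta>\<^sup>2 * (1 + bb) * (1 / (1 + bb))" using bb_ge1 by simp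
  also have "\<dots> \<le> K1 * (1 / (1 + bb))" unfolding K1_def using bb_ge1 eta_pos
    by (intro mult_right_mono) auto
  also have "\<dots> \<le> K1 * (1 + bb) powr (-\<alpha>)"
    using powr_inv_ge[of "1 + bb"] bb_ge1 eta_pos unfolding K1_def by (intro mult_left_mono) auto
  finally show ?case by (simp add: Vs_1 add.commute)
next
  case (step i)
  define s where "s = stepsize \<eta> \<alpha> (Suc i)"
  define u where "u = real i + bb"
  have u1: "1 \<le> u" unfolding u_def using bb_ge1 by simp
  have sb: "0 \<le> s" "s \<le> 1" using step_bounds[of "Suc i"] qq_lt1 step unfolding s_def by auto
  have K0: "0 \<le> K1" unfolding K1_def using bb_ge1 eta_pos by simp
  have V0: "0 \<le> Vs \<eta> \<alpha> i" unfolding Vs_def by (intro sum_nonneg) auto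
  have dU: "u powr (-\<alpha>) - (u+1) powr (-\<alpha>) \<le> u powr (-\<alpha>) / u"
  proof -
    have "u powr (-\<alpha>) - (u+1) powr (-\<alpha>) \<le> ((u+1) - u) * (- (-\<alpha>) * u powr (-\<alpha> - 1))"
      using powr_diff_le_neg2(1)[of u "u+1" "-\<alpha>"] u1 al1 by simp
    also have "\<dots> = \<alpha> * (u powr (-\<alpha>) / u)"
      using u1 by (simp add: powr_diff)
    also have "\<dots> \<le> u powr (-\<alpha>) / u" using al1 al2 u1 by (intro mult_left_le_one_le) auto
    finally show ?thesis .
  qed
  have su: "2 \<le> s * u"
  proof -
    have "real (Suc i) powr \<alpha> \<le> \<eta>/2 * real (Suc i) + M0" by (rule pow_lin) simp
    also have "\<dots> = \<eta>/2 * u" unfolding u_def bb_def using eta_pos by (simp add: field_simps)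
    finally have "2 * real (Suc i) powr \<alpha> \<le> \<eta> * u" by simp
    then have h: "(2 * real (Suc i) powr \<alpha>) * real (Suc i) powr (-\<alpha>) \<le> (\<eta> * u) * real (Suc i) powr (-\<alpha>)"
      by (rule mult_right_mono) simp
    have "real (Suc i) powr \<alpha> * real (Suc i) powr (-\<alpha>) = 1" by (simp flip: powr_add)
    then have h1: "(2 * real (Suc i) powr \<alpha>) * real (Suc i) powr (-\<alpha>) = 2" by (simp add: mult.assoc)
    have h2: "(\<eta> * u) * real (Suc i) powr (-\<alpha>) = s * u" unfolding s_def stepsize_def by simp
    show ?thesis using h h1 h2 by linarith
  qed
  have sK: "2 * s \<le> K1 * u powr (-\<alpha>)"
  proof -
    have "u \<le> (1 + bb) * real (Suc i)" unfolding u_def using bb_ge1 by (simp add: algebra_simps)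
    then have "((1 + bb) * real (Suc i)) powr (-\<alpha>) \<le> u powr (-\<alpha>)"
      using u1 al1 by (intro powr_mono2') auto
    then have "(1 + bb) powr (-\<alpha>) * real (Suc i) powr (-\<alpha>) \<le> u powr (-\<alpha>)"
      using bb_ge1 by (simp add: powr_mult)
    moreover have "1 / (1 + bb) * real (Suc i) powr (-\<alpha>) \<le> (1 + bb) powr (-\<alpha>) * real (Suc i) powr (-\<alpha>)"
      using powr_inv_ge[of "1 + bb"] bb_ge1 by (intro mult_right_mono) auto
    ultimately have "1 / (1 + bb) * real (Suc i) powr (-\<alpha>) \<le> u powr (-\<alpha>)" by linarith
    then have "K1 * (1 / (1 + bb) * real (Suc i) powr (-\<alpha>)) \<le> K1 * u powr (-\<alpha>)"
      using K0 by (intro mult_left_mono) auto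
    moreover have "2 * s \<le> K1 * (1 / (1 + bb) * real (Suc i) powr (-\<alpha>))"
    proof -
      have "2 * \<eta> \<le> K1 / (1 + bb)" unfolding K1_def using bb_ge1 eta_pos by (simp add: field_simps)
      then have "2 * \<eta> * real (Suc i) powr (-\<alpha>) \<le> K1 / (1 + bb) * real (Suc i) powr (-\<alpha>)"
        by (intro mult_right_mono) auto
      then show ?thesis unfolding s_def stepsize_def by simp
    qed
    ultimately show ?thesis by linarith
  qed
  have "Vs \<eta> \<alpha> (Suc i) = (1 - s)\<^sup>2 * Vs \<eta> \<alpha> i + s\<^sup>2" unfolding s_def Vs_Suc ..
  also have "\<dots> \<le> K1 * (u + 1) powr (-\<alpha>)"
    using step.IH unfolding u_def[symmetric]
    by (intro alg_step[OF sb V0 _ dU su sK]) (use u1 K0 in auto)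
  finally show ?case unfolding u_def by (simp add: add.commute add.left_commute)
qed

lemma V_upper:
  assumes "1 \<le> i"
  shows "Vs \<eta> \<alpha> i \<le> K1 * real i powr (-\<alpha>)"
proof -
  have "(real i + bb) powr (-\<alpha>) \<le> real i powr (-\<alpha>)" using assms bb_ge1 al1 by (intro powr_mono2') auto
  moreover have "0 \<le> K1" unfolding K1_def using bb_ge1 eta_pos by simp
  ultimately show ?thesis using V_upper0[OF assms] by (smt (verit) mult_left_mono)
qed

lemma K1_pos: "0 < K1" unfolding K1_def using bb_ge1 eta_pos by (intro add_pos_pos mult_pos_pos) auto

definition "K3 = \<eta>\<^sup>2 + K1 / \<eta>"
definition "c3 = min (\<eta>\<^sup>2) (c1 / \<eta>)"

lemma T_bounds:
  assumes "1 \<le> j"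
  shows "c3 \<le> Ts \<eta> \<alpha> j \<and> Ts \<eta> \<alpha> j \<le> K3"
  using assms
proof (induction j rule: dec_induct)
  case base
  then show ?case unfolding c3_def K3_def using Ts_1 K1_pos eta_pos by auto
next
  case (step j)
  define w where "w = real (Suc j) powr (-\<alpha>)"
  define s where "s = stepsize \<eta> \<alpha> (Suc j)"
  have sw: "s = \<eta> * w" unfolding s_def w_def stepsize_def by simp
  have w0: "0 \<le> w" unfolding w_def by simp
  have sb: "0 \<le> s" "s \<le> 1" using step_bounds[of "Suc j"] qq_lt1 step unfolding s_def by auto
  have Vb: "c1 * w \<le> Vs \<eta> \<alpha> (Suc j)" "Vs \<eta> \<alpha> (Suc j) \<le> K1 * w"
    unfolding w_def using V_lower[of "Suc j"] V_upper[of "Suc j"] by auto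
  have T: "Ts \<eta> \<alpha> (Suc j) = (1 - s) * Ts \<eta> \<alpha> j + Vs \<eta> \<alpha> (Suc j)" unfolding s_def Ts_Suc ..
  have u1: "(1 - s) * Ts \<eta> \<alpha> j \<le> (1 - s) * K3" using step sb by (intro mult_left_mono) auto
  have u2: "(1 - s) * K3 + K1 * w \<le> K3"
  proof -
    have "K1 \<le> \<eta> * K3" unfolding K3_def using eta_pos by (simp add: field_simps)
    then have "w * K1 \<le> w * (\<eta> * K3)" using w0 by (intro mult_left_mono) auto
    then show ?thesis unfolding sw by (simp add: algebra_simps)
  qed
  have l1: "(1 - s) * c3 \<le> (1 - s) * Ts \<eta> \<alpha> j" using step sb by (intro mult_left_mono) auto
  have l2: "c3 \<le> (1 - s) * c3 + c1 * w"
  proof -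
    have "\<eta> * c3 \<le> c1" unfolding c3_def using eta_pos by (simp add: field_simps min_def)
    then have "w * (\<eta> * c3) \<le> w * c1" using w0 by (intro mult_left_mono) auto
    then show ?thesis unfolding sw by (simp add: algebra_simps)
  qed
  show ?case using T u1 u2 l1 l2 Vb by linarith
qed

definition "aa = (\<eta>/2) powr (1/(\<alpha>-1))"
definition "K4 = 2 / \<eta>"

lemma aa_pos: "0 < aa" unfolding aa_def using eta_pos by simp

lemma aa_pow: "aa powr (\<alpha> - 1) = \<eta>/2"
  unfolding aa_def using al2 eta_pos by (simp add: powr_powr)

lemma P_bound0:
  "\<And>i. 1 \<le> i \<Longrightarrow> Ps \<eta> \<alpha> N i \<le> K4 * (real i + aa) powr \<alpha>"
proof (induction N)
  case 0
  then show ?case unfolding K4_def using eta_pos by (simp add: Ps_0)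
next
  case (Suc N)
  define s where "s = stepsize \<eta> \<alpha> (Suc i)"
  define x where "x = real i + aa"
  have x0: "0 < x" unfolding x_def using aa_pos by simp
  have sb: "0 \<le> s" "s \<le> 1" using step_bounds[of "Suc i"] qq_lt1 Suc unfolding s_def by auto
  have IH: "Ps \<eta> \<alpha> N (Suc i) \<le> K4 * (x + 1) powr \<alpha>"
    using Suc.IH[of "Suc i"] unfolding x_def by (simp add: add_ac)
  have a: "\<eta> \<le> s * (x + 1) powr \<alpha>"
  proof -
    have "real (Suc i) powr \<alpha> \<le> (x + 1) powr \<alpha>" unfolding x_def using aa_pos al1 by (intro powr_mono2) auto
    then have "real (Suc i) powr (-\<alpha>) * real (Suc i) powr \<alpha> \<le> real (Suc i) powr (-\<alpha>) * (x + 1) powr \<alpha>"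
      by (rule mult_left_mono) simp
    moreover have "real (Suc i) powr (-\<alpha>) * real (Suc i) powr \<alpha> = 1" by (simp flip: powr_add)
    ultimately have "1 \<le> real (Suc i) powr (-\<alpha>) * (x + 1) powr \<alpha>" by linarith
    then have "\<eta> * 1 \<le> \<eta> * (real (Suc i) powr (-\<alpha>) * (x + 1) powr \<alpha>)" using eta_pos by (intro mult_left_mono) auto
    then show ?thesis unfolding s_def stepsize_def by (simp add: mult.assoc)
  qed
  have b: "(x + 1) powr \<alpha> - x powr \<alpha> \<le> \<eta> / 2"
  proof -
    have "(x + 1) powr \<alpha> - x powr \<alpha> \<le> ((x+1) - x) * (\<alpha> * x powr (\<alpha> - 1))"
      using powr_diff_le_neg(1)[of x "x+1" \<alpha>] x0 al1 al2 by simp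
    also have "\<dots> \<le> x powr (\<alpha> - 1)" using al1 al2 by (simp add: mult_left_le_one_le)
    also have "\<dots> \<le> aa powr (\<alpha> - 1)" unfolding x_def using aa_pos al2 by (intro powr_mono2') auto
    finally show ?thesis using aa_pow by simp
  qed
  have "Ps \<eta> \<alpha> (Suc N) i = 1 + (1 - s) * Ps \<eta> \<alpha> N (Suc i)" unfolding s_def Ps_Suc ..
  also have "\<dots> \<le> 1 + (1 - s) * (K4 * (x + 1) powr \<alpha>)" using IH sb by (simp add: mult_left_mono)
  also have "\<dots> = 1 + K4 * ((x + 1) powr \<alpha> - s * (x + 1) powr \<alpha>)" by (simp add: algebra_simps)
  also have "\<dots> \<le> 1 + K4 * (x powr \<alpha> + \<eta> / 2 - \<eta>)"
    using a b eta_pos unfolding K4_def by (intro add_left_mono mult_left_mono) auto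
  also have "\<dots> = K4 * x powr \<alpha>" unfolding K4_def using eta_pos by (simp add: field_simps)
  finally show ?case unfolding x_def .
qed

lemma P_bound:
  assumes "1 \<le> i"
  shows "Ps \<eta> \<alpha> N i \<le> K4 * (1 + aa) powr \<alpha> * real i powr \<alpha>"
proof -
  have "real i + aa \<le> (1 + aa) * real i" using assms aa_pos by (simp add: algebra_simps)
  then have "(real i + aa) powr \<alpha> \<le> ((1 + aa) * real i) powr \<alpha>" using aa_pos al1 by (intro powr_mono2) auto
  also have "\<dots> = (1 + aa) powr \<alpha> * real i powr \<alpha>" using aa_pos by (simp add: powr_mult)
  finally have "K4 * (real i + aa) powr \<alpha> \<le> K4 * ((1 + aa) powr \<alpha> * real i powr \<alpha>)"
    unfolding K4_def using eta_pos by (intro mult_left_mono) auto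
  then show ?thesis using P_bound0[OF assms, of N] by (simp add: mult.assoc)
qed

lemma A_le_B:
  assumes "1 \<le> j" "j < i"
  shows "exp (\<eta> / (1 - \<alpha>) * (real j powr (1 - \<alpha>) - real i powr (1 - \<alpha>)))
     \<le> exp (- \<eta> * real i powr (- \<alpha>) * (real i - real j))"
proof -
  have "(real i - real j) * ((1 - \<alpha>) * real i powr (1 - \<alpha> - 1)) \<le> real i powr (1 - \<alpha>) - real j powr (1 - \<alpha>)"
    using powr_diff_le_neg(2)[of "real j" "real i" "1 - \<alpha>"] assms al1 al2 by simp
  then have "\<eta> / (1 - \<alpha>) * ((real i - real j) * ((1 - \<alpha>) * real i powr (- \<alpha>)))
      \<le> \<eta> / (1 - \<alpha>) * (real i powr (1 - \<alpha>) - real j powr (1 - \<alpha>))"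
    using eta_pos al2 by (intro mult_left_mono) auto
  moreover have "\<eta> / (1 - \<alpha>) * ((real i - real j) * ((1 - \<alpha>) * real i powr (- \<alpha>)))
      = \<eta> * real i powr (- \<alpha>) * (real i - real j)" using al2 by simp
  ultimately show ?thesis by (simp add: algebra_simps)
qed

lemma A_eq: "exp (\<eta> / (1 - \<alpha>) * (real j powr (1 - \<alpha>) - real i powr (1 - \<alpha>)))
    = exp (Fh \<eta> \<alpha> (real j) - Fh \<eta> \<alpha> (real i))"
  unfolding Fh_def by (simp add: right_diff_distrib)

end


lemma sgdX_repr:
  assumes "j \<le> i"
  shows "sgdX \<eta> \<alpha> x0 e i \<omega> = Yprod \<eta> \<alpha> j i * sgdX \<eta> \<alpha> x0 e j \<omega>
          + (\<Sum>k\<in>{j+1..i}. Yprod \<eta> \<alpha> k i * stepsize \<eta> \<alpha> k * e k \<omega>)"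
  using assms
proof (induction i rule: dec_induct)
  case base
  then show ?case by simp
next
  case (step i)
  define s where "s = stepsize \<eta> \<alpha> (Suc i)"
  have "(\<Sum>k\<in>{j+1..Suc i}. Yprod \<eta> \<alpha> k (Suc i) * stepsize \<eta> \<alpha> k * e k \<omega>)
      = (\<Sum>k\<in>{j+1..i}. Yprod \<eta> \<alpha> k (Suc i) * stepsize \<eta> \<alpha> k * e k \<omega>) + s * e (Suc i) \<omega>"
    using step unfolding s_def by simp
  also have "(\<Sum>k\<in>{j+1..i}. Yprod \<eta> \<alpha> k (Suc i) * stepsize \<eta> \<alpha> k * e k \<omega>)
      = (1 - s) * (\<Sum>k\<in>{j+1..i}. Yprod \<eta> \<alpha> k i * stepsize \<eta> \<alpha> k * e k \<omega>)"
    unfolding sum_distrib_left s_def by (intro sum.cong) (auto simp: Yprod_Suc)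
  finally show ?case using step unfolding s_def by (simp add: Yprod_Suc algebra_simps)
qed

lemma sgdX_repr0:
  "sgdX \<eta> \<alpha> x0 e i \<omega> = Yprod \<eta> \<alpha> 0 i * x0
          + (\<Sum>k\<in>{1..i}. Yprod \<eta> \<alpha> k i * stepsize \<eta> \<alpha> k * e k \<omega>)"
  using sgdX_repr[of 0 i] by simp

lemma (in prob_space) covar_sum:
  fixes f :: "'a \<Rightarrow> real"
  assumes "finite K" "\<And>k. k \<in> K \<Longrightarrow> integrable M (g k)"
    "\<And>k. k \<in> K \<Longrightarrow> integrable M (\<lambda>\<omega>. (f \<omega> - expectation f) * (g k \<omega> - expectation (g k)))"
  shows "covar M f (\<lambda>\<omega>. \<Sum>k\<in>K. g k \<omega>) = (\<Sum>k\<in>K. covar M f (g k))"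
proof -
  have E: "expectation (\<lambda>\<omega>. \<Sum>k\<in>K. g k \<omega>) = (\<Sum>k\<in>K. expectation (g k))"
    using assms by (intro Bochner_Integration.integral_sum) auto
  have "(\<lambda>\<omega>. (f \<omega> - expectation f) * ((\<Sum>k\<in>K. g k \<omega>) - expectation (\<lambda>\<omega>. \<Sum>k\<in>K. g k \<omega>)))
      = (\<lambda>\<omega>. \<Sum>k\<in>K. (f \<omega> - expectation f) * (g k \<omega> - expectation (g k)))"
    unfolding E by (simp add: sum_distrib_left sum_subtractf right_diff_distrib)
  then show ?thesis unfolding covar_def using assms by (simp add: Bochner_Integration.integral_sum)
qed

context prob_space
begin

context
  fixes e :: "nat \<Rightarrow> 'a \<Rightarrow> real"
  assumes meas: "\<And>i. i \<ge> 1 \<Longrightarrow> e i \<in> borel_measurable M"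
    and indep: "indep_vars (\<lambda>_. borel) e {1..}"
    and ident: "\<And>i. i \<ge> 1 \<Longrightarrow> distr M borel (e i) = distr M borel (e 1)"
    and sq_int: "integrable M (\<lambda>\<omega>. (e 1 \<omega>)\<^sup>2)"
    and mean0: "integral\<^sup>L M (e 1) = 0"
  fixes \<eta> \<alpha> x0 :: real
begin

definition "sig2 = expectation (\<lambda>\<omega>. (e 1 \<omega>)\<^sup>2)"

lemma e_int: "1 \<le> k \<Longrightarrow> integrable M (e k)"
  and e_sq_int: "1 \<le> k \<Longrightarrow> integrable M (\<lambda>\<omega>. (e k \<omega>)\<^sup>2)"
  and e_mean: "1 \<le> k \<Longrightarrow> expectation (e k) = 0"
  and e_sq: "1 \<le> k \<Longrightarrow> expectation (\<lambda>\<omega>. (e k \<omega>)\<^sup>2) = sig2"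
proof -
  assume k: "1 \<le> k"
  have m1: "e 1 \<in> borel_measurable M" using meas by simp
  have mk: "e k \<in> borel_measurable M" using meas k by simp
  have i1: "integrable M (e 1)" by (rule square_integrable_imp_integrable[OF m1 sq_int])
  have "integrable (distr M borel (e 1)) (\<lambda>x. x)" using integrable_distr_eq[OF m1, of "\<lambda>x. x"] i1 by simp
  then have "integrable (distr M borel (e k)) (\<lambda>x. x)" by (simp only: ident[OF k])
  then show "integrable M (e k)" using integrable_distr_eq[OF mk, of "\<lambda>x. x"] by simp
  have "integrable (distr M borel (e 1)) (\<lambda>x. x\<^sup>2)" using integrable_distr_eq[OF m1, of "\<lambda>x. x\<^sup>2"] sq_int by simp
  then have "integrable (distr M borel (e k)) (\<lambda>x. x\<^sup>2)" by (simp only: ident[OF k])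
  then show "integrable M (\<lambda>\<omega>. (e k \<omega>)\<^sup>2)" using integrable_distr_eq[OF mk, of "\<lambda>x. x\<^sup>2"] by simp
  have "expectation (e k) = integral\<^sup>L (distr M borel (e k)) (\<lambda>x. x)" using integral_distr[OF mk, of "\<lambda>x. x"] by simp
  also have "\<dots> = integral\<^sup>L (distr M borel (e 1)) (\<lambda>x. x)" by (simp only: ident[OF k])
  also have "\<dots> = expectation (e 1)" using integral_distr[OF m1, of "\<lambda>x. x"] by simp
  finally show "expectation (e k) = 0" using mean0 by simp
  have "expectation (\<lambda>\<omega>. (e k \<omega>)\<^sup>2) = integral\<^sup>L (distr M borel (e k)) (\<lambda>x. x\<^sup>2)" using integral_distr[OF mk, of "\<lambda>x. x\<^sup>2"] by simp
  also have "\<dots> = integral\<^sup>L (distr M borel (e 1)) (\<lambda>x. x\<^sup>2)" by (simp only: ident[OF k])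
  also have "\<dots> = expectation (\<lambda>\<omega>. (e 1 \<omega>)\<^sup>2)" using integral_distr[OF m1, of "\<lambda>x. x\<^sup>2"] by simp
  finally show "expectation (\<lambda>\<omega>. (e k \<omega>)\<^sup>2) = sig2" unfolding sig2_def .
qed

lemma e_prod_both: "1 \<le> k \<Longrightarrow> 1 \<le> l \<Longrightarrow> integrable M (\<lambda>\<omega>. e k \<omega> * e l \<omega>) \<and> expectation (\<lambda>\<omega>. e k \<omega> * e l \<omega>) = (if k = l then sig2 else 0)"
proof -
  assume k: "1 \<le> k" and l: "1 \<le> l"
  show ?thesis
  proof (cases "k = l")
    case True
    then show ?thesis using e_sq_int[OF k] e_sq[OF k] by (simp add: power2_eq_square)
  next
    case False
    have ind: "indep_vars (\<lambda>_. borel) e {k, l}" by (rule indep_vars_subset[OF indep]) (use k l in auto)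
    have "integrable M (\<lambda>\<omega>. \<Prod>i\<in>{k,l}. e i \<omega>)"
      using ind k l e_int by (intro indep_vars_integrable) auto
    moreover have "expectation (\<lambda>\<omega>. \<Prod>i\<in>{k,l}. e i \<omega>) = (\<Prod>i\<in>{k,l}. expectation (e i))"
      using ind k l e_int by (intro indep_vars_lebesgue_integral) auto
    ultimately show ?thesis using False e_mean[OF k] e_mean[OF l] by simp
  qed
qed

lemma e_prod_int: "1 \<le> k \<Longrightarrow> 1 \<le> l \<Longrightarrow> integrable M (\<lambda>\<omega>. e k \<omega> * e l \<omega>)"
  using e_prod_both by blast
lemma e_prod: "1 \<le> k \<Longrightarrow> 1 \<le> l \<Longrightarrow> expectation (\<lambda>\<omega>. e k \<omega> * e l \<omega>) = (if k = l then sig2 else 0)"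
  using e_prod_both by blast

lemma lin_int:
  assumes "finite S" "S \<subseteq> {1..}"
  shows "integrable M (\<lambda>\<omega>. \<Sum>k\<in>S. b k * e k \<omega>)"
  using assms e_int by (intro Bochner_Integration.integrable_sum integrable_mult_right) auto

lemma lin_mean:
  assumes "finite S" "S \<subseteq> {1..}"
  shows "expectation (\<lambda>\<omega>. \<Sum>k\<in>S. b k * e k \<omega>) = 0"
proof -
  have "expectation (\<lambda>\<omega>. \<Sum>k\<in>S. b k * e k \<omega>) = (\<Sum>k\<in>S. expectation (\<lambda>\<omega>. b k * e k \<omega>))"
    using assms e_int by (intro Bochner_Integration.integral_sum) auto
  also have "\<dots> = 0"
  proof (rule sum.neutral, rule ballI)
    fix k assume "k \<in> S"
    then have "1 \<le> k" using assms by auto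
    then show "expectation (\<lambda>\<omega>. b k * e k \<omega>) = 0" using e_mean by simp
  qed
  finally show ?thesis .
qed

lemma lin_prod:
  assumes "finite S" "S \<subseteq> {1..}" "finite T" "T \<subseteq> {1..}"
  shows "integrable M (\<lambda>\<omega>. (\<Sum>k\<in>S. b k * e k \<omega>) * (\<Sum>l\<in>T. d l * e l \<omega>))"
    and "expectation (\<lambda>\<omega>. (\<Sum>k\<in>S. b k * e k \<omega>) * (\<Sum>l\<in>T. d l * e l \<omega>)) = sig2 * (\<Sum>k\<in>S\<inter>T. b k * d k)"
proof -
  have eq: "(\<lambda>\<omega>. (\<Sum>k\<in>S. b k * e k \<omega>) * (\<Sum>l\<in>T. d l * e l \<omega>)) = (\<lambda>\<omega>. \<Sum>k\<in>S. \<Sum>l\<in>T. (b k * d l) * (e k \<omega> * e l \<omega>))"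
    unfolding sum_distrib_right by (simp add: sum_distrib_left mult_ac)
  have int: "\<And>k l. k \<in> S \<Longrightarrow> l \<in> T \<Longrightarrow> integrable M (\<lambda>\<omega>. (b k * d l) * (e k \<omega> * e l \<omega>))"
    using assms e_prod_int by (intro integrable_mult_right) auto
  show "integrable M (\<lambda>\<omega>. (\<Sum>k\<in>S. b k * e k \<omega>) * (\<Sum>l\<in>T. d l * e l \<omega>))"
    unfolding eq using int by (intro Bochner_Integration.integrable_sum) auto
  have "expectation (\<lambda>\<omega>. \<Sum>k\<in>S. \<Sum>l\<in>T. (b k * d l) * (e k \<omega> * e l \<omega>))
      = (\<Sum>k\<in>S. \<Sum>l\<in>T. (b k * d l) * expectation (\<lambda>\<omega>. e k \<omega> * e l \<omega>))"
  proof -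
    have "expectation (\<lambda>\<omega>. \<Sum>k\<in>S. \<Sum>l\<in>T. (b k * d l) * (e k \<omega> * e l \<omega>))
      = (\<Sum>k\<in>S. expectation (\<lambda>\<omega>. \<Sum>l\<in>T. (b k * d l) * (e k \<omega> * e l \<omega>)))"
      using int by (intro Bochner_Integration.integral_sum Bochner_Integration.integrable_sum) auto
    also have "\<dots> = (\<Sum>k\<in>S. \<Sum>l\<in>T. expectation (\<lambda>\<omega>. (b k * d l) * (e k \<omega> * e l \<omega>)))"
      using int by (intro sum.cong refl Bochner_Integration.integral_sum) auto
    finally show ?thesis by simp
  qed
  also have "\<dots> = (\<Sum>k\<in>S. \<Sum>l\<in>T. if k = l then b k * d k * sig2 else 0)"
  proof (intro sum.cong refl)
    fix k l assume "k \<in> S" "l \<in> T"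
    then have "1 \<le> k" "1 \<le> l" using assms by auto
    then show "b k * d l * expectation (\<lambda>\<omega>. e k \<omega> * e l \<omega>) = (if k = l then b k * d k * sig2 else 0)"
      using e_prod by simp
  qed
  also have "\<dots> = (\<Sum>k\<in>S. if k \<in> T then b k * d k * sig2 else 0)"
    using assms by (simp add: sum.delta)
  also have "\<dots> = (\<Sum>k\<in>S\<inter>T. b k * d k * sig2)"
    using assms by (simp add: sum.inter_restrict)
  also have "\<dots> = sig2 * (\<Sum>k\<in>S\<inter>T. b k * d k)" by (simp add: sum_distrib_left mult_ac)
  finally show "expectation (\<lambda>\<omega>. (\<Sum>k\<in>S. b k * e k \<omega>) * (\<Sum>l\<in>T. d l * e l \<omega>)) = sig2 * (\<Sum>k\<in>S\<inter>T. b k * d k)"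
    unfolding eq .
qed

lemma X_centered:
  "sgdX \<eta> \<alpha> x0 e i \<omega> - expectation (sgdX \<eta> \<alpha> x0 e i) = (\<Sum>k\<in>{1..i}. (Yprod \<eta> \<alpha> k i * stepsize \<eta> \<alpha> k) * e k \<omega>)"
  and X_int: "integrable M (sgdX \<eta> \<alpha> x0 e i)"
  and X_mean: "expectation (sgdX \<eta> \<alpha> x0 e i) = Yprod \<eta> \<alpha> 0 i * x0"
proof -
  have f: "sgdX \<eta> \<alpha> x0 e i = (\<lambda>\<omega>. Yprod \<eta> \<alpha> 0 i * x0 + (\<Sum>k\<in>{1..i}. (Yprod \<eta> \<alpha> k i * stepsize \<eta> \<alpha> k) * e k \<omega>))"
    by (rule ext) (rule sgdX_repr0)
  have li: "integrable M (\<lambda>\<omega>. \<Sum>k\<in>{1..i}. (Yprod \<eta> \<alpha> k i * stepsize \<eta> \<alpha> k) * e k \<omega>)"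
    by (rule lin_int) auto
  have lm: "expectation (\<lambda>\<omega>. \<Sum>k\<in>{1..i}. (Yprod \<eta> \<alpha> k i * stepsize \<eta> \<alpha> k) * e k \<omega>) = 0"
    by (rule lin_mean) auto
  show "integrable M (sgdX \<eta> \<alpha> x0 e i)" unfolding f using li by simp
  show m: "expectation (sgdX \<eta> \<alpha> x0 e i) = Yprod \<eta> \<alpha> 0 i * x0" unfolding f using li lm prob_space by simp
  show "sgdX \<eta> \<alpha> x0 e i \<omega> - expectation (sgdX \<eta> \<alpha> x0 e i) = (\<Sum>k\<in>{1..i}. (Yprod \<eta> \<alpha> k i * stepsize \<eta> \<alpha> k) * e k \<omega>)"
    unfolding m by (simp add: sgdX_repr0)
qed

lemma X_cov_int:
  "integrable M (\<lambda>\<omega>. (sgdX \<eta> \<alpha> x0 e a \<omega> - expectation (sgdX \<eta> \<alpha> x0 e a)) * (sgdX \<eta> \<alpha> x0 e b \<omega> - expectation (sgdX \<eta> \<alpha> x0 e b)))"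
  unfolding X_centered by (rule lin_prod(1)) auto

lemma covar_X_gen:
  "covar M (sgdX \<eta> \<alpha> x0 e a) (sgdX \<eta> \<alpha> x0 e b) = sig2 * (\<Sum>k\<in>{1..a}\<inter>{1..b}. (Yprod \<eta> \<alpha> k a * stepsize \<eta> \<alpha> k) * (Yprod \<eta> \<alpha> k b * stepsize \<eta> \<alpha> k))"
  unfolding covar_def X_centered by (rule lin_prod(2)) auto

lemma covar_X:
  assumes "b \<le> a"
  shows "covar M (sgdX \<eta> \<alpha> x0 e a) (sgdX \<eta> \<alpha> x0 e b) = sig2 * Yprod \<eta> \<alpha> b a * Vs \<eta> \<alpha> b"
proof -
  have "{1..a}\<inter>{1..b} = {1..b}" using assms by auto
  moreover have "(\<Sum>k\<in>{1..b}. (Yprod \<eta> \<alpha> k a * stepsize \<eta> \<alpha> k) * (Yprod \<eta> \<alpha> k b * stepsize \<eta> \<alpha> k))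
     = (\<Sum>k\<in>{1..b}. Yprod \<eta> \<alpha> b a * ((Yprod \<eta> \<alpha> k b)\<^sup>2 * (stepsize \<eta> \<alpha> k)\<^sup>2))"
  proof (intro sum.cong refl)
    fix k assume "k \<in> {1..b}"
    then have "Yprod \<eta> \<alpha> k a = Yprod \<eta> \<alpha> k b * Yprod \<eta> \<alpha> b a" using assms by (intro Yprod_split) auto
    then show "(Yprod \<eta> \<alpha> k a * stepsize \<eta> \<alpha> k) * (Yprod \<eta> \<alpha> k b * stepsize \<eta> \<alpha> k)
       = Yprod \<eta> \<alpha> b a * ((Yprod \<eta> \<alpha> k b)\<^sup>2 * (stepsize \<eta> \<alpha> k)\<^sup>2)"
      by (simp add: power2_eq_square mult_ac)
  qed
  moreover have "(\<Sum>k\<in>{1..b}. Yprod \<eta> \<alpha> b a * ((Yprod \<eta> \<alpha> k b)\<^sup>2 * (stepsize \<eta> \<alpha> k)\<^sup>2))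
     = Yprod \<eta> \<alpha> b a * Vs \<eta> \<alpha> b" unfolding Vs_def by (simp add: sum_distrib_left)
  ultimately show ?thesis unfolding covar_X_gen by (simp only: mult.assoc)
qed

lemma var_X: "var M (sgdX \<eta> \<alpha> x0 e a) = sig2 * Vs \<eta> \<alpha> a"
proof -
  have "var M (sgdX \<eta> \<alpha> x0 e a) = covar M (sgdX \<eta> \<alpha> x0 e a) (sgdX \<eta> \<alpha> x0 e a)"
    unfolding var_def covar_def by (simp add: power2_eq_square)
  then show ?thesis using covar_X[of a a] by simp
qed

lemma EX2: "expectation (\<lambda>\<omega>. (sgdX \<eta> \<alpha> x0 e a \<omega>)\<^sup>2) = (Yprod \<eta> \<alpha> 0 a * x0)\<^sup>2 + sig2 * Vs \<eta> \<alpha> a"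
proof -
  define c where "c = Yprod \<eta> \<alpha> 0 a * x0"
  define L where "L = (\<lambda>\<omega>. \<Sum>k\<in>{1..a}. (Yprod \<eta> \<alpha> k a * stepsize \<eta> \<alpha> k) * e k \<omega>)"
  have f: "\<And>\<omega>. sgdX \<eta> \<alpha> x0 e a \<omega> = c + L \<omega>" unfolding c_def L_def by (rule sgdX_repr0)
  have li: "integrable M L" unfolding L_def by (rule lin_int) auto
  have lm: "expectation L = 0" unfolding L_def by (rule lin_mean) auto
  have lli: "integrable M (\<lambda>\<omega>. L \<omega> * L \<omega>)" unfolding L_def by (rule lin_prod(1)) auto
  have llm: "expectation (\<lambda>\<omega>. L \<omega> * L \<omega>) = sig2 * Vs \<eta> \<alpha> a"
  proof -
    have "expectation (\<lambda>\<omega>. L \<omega> * L \<omega>) = sig2 * (\<Sum>k\<in>{1..a}\<inter>{1..a}. (Yprod \<eta> \<alpha> k a * stepsize \<eta> \<alpha> k) * (Yprod \<eta> \<alpha> k a * stepsize \<eta> \<alpha> k))"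
      unfolding L_def by (rule lin_prod(2)) auto
    then show ?thesis unfolding Vs_def by (simp add: power2_eq_square mult_ac)
  qed
  have "(\<lambda>\<omega>. (sgdX \<eta> \<alpha> x0 e a \<omega>)\<^sup>2) = (\<lambda>\<omega>. c\<^sup>2 + (2 * c) * L \<omega> + L \<omega> * L \<omega>)"
    unfolding f by (simp add: power2_eq_square algebra_simps)
  moreover have "expectation (\<lambda>\<omega>. c\<^sup>2 + (2 * c) * L \<omega> + L \<omega> * L \<omega>) = c\<^sup>2 + (2 * c) * expectation L + expectation (\<lambda>\<omega>. L \<omega> * L \<omega>)"
    using li lli prob_space by simp
  ultimately show ?thesis unfolding c_def[symmetric] using lm llm by simp
qed

lemma covar_sumX:
  assumes "j \<le> i"
  shows "covar M (sgdX \<eta> \<alpha> x0 e i) (\<lambda>\<omega>. \<Sum>k\<in>{1..j}. sgdX \<eta> \<alpha> x0 e k \<omega>) = sig2 * Yprod \<eta> \<alpha> j i * Ts \<eta> \<alpha> j"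
proof -
  have "covar M (sgdX \<eta> \<alpha> x0 e i) (\<lambda>\<omega>. \<Sum>k\<in>{1..j}. sgdX \<eta> \<alpha> x0 e k \<omega>) = (\<Sum>k\<in>{1..j}. covar M (sgdX \<eta> \<alpha> x0 e i) (sgdX \<eta> \<alpha> x0 e k))"
    using X_int X_cov_int by (intro covar_sum) auto
  also have "\<dots> = (\<Sum>k\<in>{1..j}. sig2 * Yprod \<eta> \<alpha> j i * (Yprod \<eta> \<alpha> k j * Vs \<eta> \<alpha> k))"
  proof (intro sum.cong refl)
    fix k assume k: "k \<in> {1..j}"
    have "covar M (sgdX \<eta> \<alpha> x0 e i) (sgdX \<eta> \<alpha> x0 e k) = sig2 * Yprod \<eta> \<alpha> k i * Vs \<eta> \<alpha> k"
      using k assms by (intro covar_X) auto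
    moreover have "Yprod \<eta> \<alpha> k i = Yprod \<eta> \<alpha> k j * Yprod \<eta> \<alpha> j i" using k assms by (intro Yprod_split) auto
    ultimately show "covar M (sgdX \<eta> \<alpha> x0 e i) (sgdX \<eta> \<alpha> x0 e k) = sig2 * Yprod \<eta> \<alpha> j i * (Yprod \<eta> \<alpha> k j * Vs \<eta> \<alpha> k)"
      by (simp add: mult_ac)
  qed
  also have "\<dots> = sig2 * Yprod \<eta> \<alpha> j i * Ts \<eta> \<alpha> j" unfolding Ts_def by (simp add: sum_distrib_left)
  finally show ?thesis .
qed

end
end


lemma scale_le:
  fixes x c C R :: real
  assumes "0 \<le> R" "x \<le> c * R" "c \<le> C"
  shows "x \<le> C * R"
  using assms by (smt (verit) mult_right_mono)

lemma det_bundle: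
  fixes \<eta> \<alpha> :: real
  assumes "0 < \<eta>" "\<eta> < 2 powr \<alpha>" "1/2 < \<alpha>" "\<alpha> < 1"
  shows "\<exists>c1 K1 c2 K2 c3 K3 K4. 0 < c1 \<and> 0 < K1 \<and> 0 < c2 \<and> 0 < K2 \<and> 0 < c3 \<and> 0 < K3 \<and> 0 < K4 \<and>
    (\<forall>i. 1 \<le> i \<longrightarrow> c1 * real i powr (-\<alpha>) \<le> Vs \<eta> \<alpha> i \<and> Vs \<eta> \<alpha> i \<le> K1 * real i powr (-\<alpha>)) \<and>
    (\<forall>i j. 1 \<le> j \<and> j \<le> i \<longrightarrow> c2 * exp (\<eta> / (1 - \<alpha>) * (real j powr (1 - \<alpha>) - real i powr (1 - \<alpha>))) \<le> Yprod \<eta> \<alpha> j i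
        \<and> Yprod \<eta> \<alpha> j i \<le> K2 * exp (\<eta> / (1 - \<alpha>) * (real j powr (1 - \<alpha>) - real i powr (1 - \<alpha>)))) \<and>
    (\<forall>j. 1 \<le> j \<longrightarrow> c3 \<le> Ts \<eta> \<alpha> j \<and> Ts \<eta> \<alpha> j \<le> K3) \<and>
    (\<forall>N i. 1 \<le> i \<longrightarrow> Ps \<eta> \<alpha> N i \<le> K4 * real i powr \<alpha>)"
proof -
  have c1: "0 < c1 \<eta>" using c1_pos[OF assms] .
  have K1: "0 < K1 \<eta> \<alpha>" using K1_pos[OF assms] .
  have c3: "0 < c3 \<eta>" unfolding c3_def[OF assms] using c1 assms by simp
  have K3: "0 < K3 \<eta> \<alpha>" unfolding K3_def[OF assms] using K1 assms by (simp add: add_pos_pos)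
  have K4: "0 < K4 \<eta> * (1 + aa \<eta> \<alpha>) powr \<alpha>" unfolding K4_def[OF assms] using assms aa_pos[OF assms] by simp
  show ?thesis
    apply (rule exI[of _ "c1 \<eta>"], rule exI[of _ "K1 \<eta> \<alpha>"], rule exI[of _ "exp (- EE \<eta> \<alpha>)"], rule exI[of _ "exp \<eta>"],
           rule exI[of _ "c3 \<eta>"], rule exI[of _ "K3 \<eta> \<alpha>"], rule exI[of _ "K4 \<eta> * (1 + aa \<eta> \<alpha>) powr \<alpha>"])
    using c1 K1 c3 K3 K4 V_lower[OF assms] V_upper[OF assms] Y_lower[OF assms] Y_upper[OF assms] T_bounds[OF assms] P_bound[OF assms] A_eq[OF assms]
    by auto
qed

theorem lemmaC1:
  fixes M :: "'a measure" and e :: "nat \<Rightarrow> 'a \<Rightarrow> real"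
    and \<eta> \<alpha> x0 :: real
  assumes P: "prob_space M"
    and eta_pos: "\<eta> > 0"
    and eta_small: "\<eta> < 2 powr \<alpha>"
    and alpha: "1/2 < \<alpha>" "\<alpha> < 1"
    and meas: "\<And>i. i \<ge> 1 \<Longrightarrow> e i \<in> borel_measurable M"
    and indep: "prob_space.indep_vars M (\<lambda>_. borel) e {1..}"
    and ident: "\<And>i. i \<ge> 1 \<Longrightarrow> distr M borel (e i) = distr M borel (e 1)"
    and sq_int: "integrable M (\<lambda>\<omega>. (e 1 \<omega>)\<^sup>2)"
    and mean0: "integral\<^sup>L M (e 1) = 0"
    and sq_pos: "integral\<^sup>L M (\<lambda>\<omega>. (e 1 \<omega>)\<^sup>2) > 0"
  shows
    "(\<forall>i j \<omega>. j < i \<longrightarrow>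
        sgdX \<eta> \<alpha> x0 e i \<omega> = Yprod \<eta> \<alpha> j i * sgdX \<eta> \<alpha> x0 e j \<omega>
          + (\<Sum>k\<in>{j+1..i}. Yprod \<eta> \<alpha> k i * stepsize \<eta> \<alpha> k * e k \<omega>))
     \<and> (\<exists>C>0. \<forall>i j. 1 \<le> j \<and> j < i \<longrightarrow>
        (let X = sgdX \<eta> \<alpha> x0 e;
             A = exp (\<eta> / (1 - \<alpha>) * (real j powr (1 - \<alpha>) - real i powr (1 - \<alpha>)));
             B = exp (- \<eta> * real i powr (- \<alpha>) * (real i - real j))
         in
          \<comment> \<open>(1)\<close>
          var M (X i) \<le> C * integral\<^sup>L M (\<lambda>\<omega>. (X i \<omega>)\<^sup>2)
          \<and> integral\<^sup>L M (\<lambda>\<omega>. (X i \<omega>)\<^sup>2) \<le> C * var M (X i)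
          \<and> integral\<^sup>L M (\<lambda>\<omega>. (X i \<omega>)\<^sup>2) \<le> C * real i powr (- \<alpha>)
          \<and> real i powr (- \<alpha>) \<le> C * integral\<^sup>L M (\<lambda>\<omega>. (X i \<omega>)\<^sup>2)
          \<and> var M (X i) \<le> C * real i powr (- \<alpha>)
          \<and> real i powr (- \<alpha>) \<le> C * var M (X i)
          \<comment> \<open>(2)\<close>
          \<and> 0 \<le> covar M (X i) (X j)
          \<and> covar M (X i) (X j) \<le> C * (A * real j powr (- \<alpha>))
          \<and> A * real j powr (- \<alpha>) \<le> C * covar M (X i) (X j)
          \<and> A * real j powr (- \<alpha>) \<le> B * real j powr (- \<alpha>)
          \<comment> \<open>(3)\<close>
          \<and> covar M (X i) (\<lambda>\<omega>. \<Sum>k\<in>{1..j}. X k \<omega>) \<le> C * A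
          \<and> A \<le> C * covar M (X i) (\<lambda>\<omega>. \<Sum>k\<in>{1..j}. X k \<omega>)
          \<and> A \<le> B
          \<comment> \<open>(4)\<close>
          \<and> summable (\<lambda>n. covar M (X (i + n)) (X j))
          \<and> (\<Sum>n. covar M (X (i + n)) (X j))
                \<le> C * (A * real i powr \<alpha> * real j powr (- \<alpha>))
          \<and> A * real i powr \<alpha> * real j powr (- \<alpha>)
                \<le> B * real i powr \<alpha> * real j powr (- \<alpha>)))"
proof -
  interpret prob_space M by (rule P)
  note facts = meas indep ident sq_int mean0
  define \<sigma> where "\<sigma> = integral\<^sup>L M (\<lambda>\<omega>. (e 1 \<omega>)\<^sup>2)"
  have sig: "sig2 e = \<sigma>" unfolding \<sigma>_def using sig2_def[OF facts] .
  have \<sigma>_pos: "0 < \<sigma>" unfolding \<sigma>_def using sq_pos .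
  have dassm: "0 < \<eta>" "\<eta> < 2 powr \<alpha>" "1/2 < \<alpha>" "\<alpha> < 1" using eta_pos eta_small alpha by auto
  obtain c1 K1 c2 K2 c3 K3 K4 where pos: "0 < c1" "0 < K1" "0 < c2" "0 < K2" "0 < c3" "0 < K3" "0 < K4"
    and Vb: "\<And>i. 1 \<le> i \<Longrightarrow> c1 * real i powr (-\<alpha>) \<le> Vs \<eta> \<alpha> i \<and> Vs \<eta> \<alpha> i \<le> K1 * real i powr (-\<alpha>)"
    and Yb: "\<And>i j. 1 \<le> j \<and> j \<le> i \<Longrightarrow> c2 * exp (\<eta> / (1 - \<alpha>) * (real j powr (1 - \<alpha>) - real i powr (1 - \<alpha>))) \<le> Yprod \<eta> \<alpha> j i
        \<and> Yprod \<eta> \<alpha> j i \<le> K2 * exp (\<eta> / (1 - \<alpha>) * (real j powr (1 - \<alpha>) - real i powr (1 - \<alpha>)))"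
    and Tb: "\<And>j. 1 \<le> j \<Longrightarrow> c3 \<le> Ts \<eta> \<alpha> j \<and> Ts \<eta> \<alpha> j \<le> K3"
    and Pb: "\<And>N i. 1 \<le> i \<Longrightarrow> Ps \<eta> \<alpha> N i \<le> K4 * real i powr \<alpha>"
    using det_bundle[OF dassm] by blast
  define r where "r = (1 - \<eta>)\<^sup>2 * x0\<^sup>2 / \<eta>\<^sup>2"
  have r0: "0 \<le> r" unfolding r_def by simp
  define C where "C = 1 + (1 + r / \<sigma>) + (\<sigma> + r) * K1 + 1 / (\<sigma> * c1) + \<sigma> * K1 + 1 / (\<sigma> * c1 * c2)
     + \<sigma> * K2 * K1 + \<sigma> * K2 * K3 + 1 / (\<sigma> * c2 * c3) + \<sigma> * K1 * K2 * K4"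
  have Cge: "1 \<le> C" "1 + r / \<sigma> \<le> C" "(\<sigma> + r) * K1 \<le> C" "1 / (\<sigma> * c1) \<le> C" "\<sigma> * K1 \<le> C"
     "1 / (\<sigma> * c1 * c2) \<le> C" "\<sigma> * K2 * K1 \<le> C" "\<sigma> * K2 * K3 \<le> C" "1 / (\<sigma> * c2 * c3) \<le> C"
     "\<sigma> * K1 * K2 * K4 \<le> C"
    unfolding C_def using pos \<sigma>_pos r0 by (simp_all add: add_nonneg_nonneg)
  have C0: "0 < C" using Cge by simp
  show ?thesis
  proof (intro conjI)
    show "\<forall>i j \<omega>. j < i \<longrightarrow>
        sgdX \<eta> \<alpha> x0 e i \<omega> = Yprod \<eta> \<alpha> j i * sgdX \<eta> \<alpha> x0 e j \<omega>
          + (\<Sum>k\<in>{j+1..i}. Yprod \<eta> \<alpha> k i * stepsize \<eta> \<alpha> k * e k \<omega>)"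
      using sgdX_repr by (metis less_imp_le)
  next
    show "\<exists>C>0. \<forall>i j. 1 \<le> j \<and> j < i \<longrightarrow> (let X = sgdX \<eta> \<alpha> x0 e;
             A = exp (\<eta> / (1 - \<alpha>) * (real j powr (1 - \<alpha>) - real i powr (1 - \<alpha>)));
             B = exp (- \<eta> * real i powr (- \<alpha>) * (real i - real j))
         in var M (X i) \<le> C * integral\<^sup>L M (\<lambda>\<omega>. (X i \<omega>)\<^sup>2)
          \<and> integral\<^sup>L M (\<lambda>\<omega>. (X i \<omega>)\<^sup>2) \<le> C * var M (X i)
          \<and> integral\<^sup>L M (\<lambda>\<omega>. (X i \<omega>)\<^sup>2) \<le> C * real i powr (- \<alpha>)
          \<and> real i powr (- \<alpha>) \<le> C * integral\<^sup>L M (\<lambda>\<omega>. (X i \<omega>)\<^sup>2)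
          \<and> var M (X i) \<le> C * real i powr (- \<alpha>)
          \<and> real i powr (- \<alpha>) \<le> C * var M (X i)
          \<and> 0 \<le> covar M (X i) (X j)
          \<and> covar M (X i) (X j) \<le> C * (A * real j powr (- \<alpha>))
          \<and> A * real j powr (- \<alpha>) \<le> C * covar M (X i) (X j)
          \<and> A * real j powr (- \<alpha>) \<le> B * real j powr (- \<alpha>)
          \<and> covar M (X i) (\<lambda>\<omega>. \<Sum>k\<in>{1..j}. X k \<omega>) \<le> C * A
          \<and> A \<le> C * covar M (X i) (\<lambda>\<omega>. \<Sum>k\<in>{1..j}. X k \<omega>)
          \<and> A \<le> B
          \<and> summable (\<lambda>n. covar M (X (i + n)) (X j))
          \<and> (\<Sum>n. covar M (X (i + n)) (X j))
                \<le> C * (A * real i powr \<alpha> * real j powr (- \<alpha>))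
          \<and> A * real i powr \<alpha> * real j powr (- \<alpha>)
                \<le> B * real i powr \<alpha> * real j powr (- \<alpha>))"
    proof (intro exI[of _ C] conjI allI impI C0)
      fix i j :: nat
      assume ij: "1 \<le> j \<and> j < i"
      have i1: "1 \<le> i" and j1: "1 \<le> j" and ji: "j \<le> i" using ij by auto
      let ?X = "sgdX \<eta> \<alpha> x0 e"
      let ?A = "exp (\<eta> / (1 - \<alpha>) * (real j powr (1 - \<alpha>) - real i powr (1 - \<alpha>)))"
      let ?B = "exp (- \<eta> * real i powr (- \<alpha>) * (real i - real j))"
      let ?wi = "real i powr (- \<alpha>)"
      let ?wj = "real j powr (- \<alpha>)"
      let ?V = "Vs \<eta> \<alpha> i"
      let ?Vj = "Vs \<eta> \<alpha> j"
      let ?Y = "Yprod \<eta> \<alpha> j i"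
      have Vi: "c1 * ?wi \<le> ?V" "?V \<le> K1 * ?wi" using Vb[OF i1] by auto
      have Vj: "c1 * ?wj \<le> ?Vj" "?Vj \<le> K1 * ?wj" using Vb[OF j1] by auto
      have Yji: "c2 * ?A \<le> ?Y" "?Y \<le> K2 * ?A" using Yb[of j i] ij by auto
      have Tj: "c3 \<le> Ts \<eta> \<alpha> j" "Ts \<eta> \<alpha> j \<le> K3" using Tb[OF j1] by auto
      have AB: "?A \<le> ?B" using A_le_B[OF dassm j1] ij by simp
      have wi0: "0 \<le> ?wi" and wj0: "0 \<le> ?wj" by auto
      have A0: "0 \<le> ?A" by simp
      have V0: "0 \<le> ?V" using Vi pos wi0 by (smt (verit) mult_nonneg_nonneg)
      have Vj0: "0 \<le> ?Vj" using Vj pos wj0 by (smt (verit) mult_nonneg_nonneg)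
      have Y0: "0 \<le> ?Y" using Yji pos A0 by (smt (verit) mult_nonneg_nonneg)
      have varX: "var M (?X i) = \<sigma> * ?V" using var_X[OF facts] sig by simp
      have EX2i: "integral\<^sup>L M (\<lambda>\<omega>. (?X i \<omega>)\<^sup>2) = (Yprod \<eta> \<alpha> 0 i * x0)\<^sup>2 + \<sigma> * ?V"
        using EX2[OF facts] sig by simp
      have y0: "(Yprod \<eta> \<alpha> 0 i * x0)\<^sup>2 \<le> r * ?V"
      proof -
        have "Yprod \<eta> \<alpha> 0 i = Yprod \<eta> \<alpha> 0 1 * Yprod \<eta> \<alpha> 1 i" using i1 by (intro Yprod_split) auto
        moreover have "Yprod \<eta> \<alpha> 0 1 = 1 - \<eta>" using Yprod_Suc[of 0 0 \<eta> \<alpha>] by simp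
        ultimately have e1: "(Yprod \<eta> \<alpha> 0 i * x0)\<^sup>2 = (1 - \<eta>)\<^sup>2 * x0\<^sup>2 * (Yprod \<eta> \<alpha> 1 i)\<^sup>2"
          by (simp add: power_mult_distrib)
        have "(Yprod \<eta> \<alpha> 1 i)\<^sup>2 * (stepsize \<eta> \<alpha> 1)\<^sup>2 \<le> ?V"
          unfolding Vs_def
          by (rule member_le_sum[where f = "\<lambda>k. (Yprod \<eta> \<alpha> k i)\<^sup>2 * (stepsize \<eta> \<alpha> k)\<^sup>2"]) (use i1 in auto)
        then have "(Yprod \<eta> \<alpha> 1 i)\<^sup>2 \<le> ?V / \<eta>\<^sup>2" using dassm by (simp add: field_simps)
        then have "(1 - \<eta>)\<^sup>2 * x0\<^sup>2 * (Yprod \<eta> \<alpha> 1 i)\<^sup>2 \<le> (1 - \<eta>)\<^sup>2 * x0\<^sup>2 * (?V / \<eta>\<^sup>2)"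
          by (intro mult_left_mono) auto
        then show ?thesis unfolding e1 r_def by simp
      qed
      have EXle: "integral\<^sup>L M (\<lambda>\<omega>. (?X i \<omega>)\<^sup>2) \<le> (1 + r / \<sigma>) * (\<sigma> * ?V)"
        using EX2i y0 \<sigma>_pos by (simp add: algebra_simps)
      have EXge: "\<sigma> * ?V \<le> integral\<^sup>L M (\<lambda>\<omega>. (?X i \<omega>)\<^sup>2)" using EX2i by simp
      have covX: "covar M (?X i) (?X j) = \<sigma> * ?Y * ?Vj" using covar_X[OF facts ji] sig by simp
      have covS: "covar M (?X i) (\<lambda>\<omega>. \<Sum>k\<in>{1..j}. ?X k \<omega>) = \<sigma> * ?Y * Ts \<eta> \<alpha> j"
        using covar_sumX[OF facts ji] sig by simp
      have covn: "\<And>n. covar M (?X (i + n)) (?X j) = (\<sigma> * ?Vj * ?Y) * Yprod \<eta> \<alpha> i (i + n)"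
      proof -
        fix n
        have "covar M (?X (i + n)) (?X j) = \<sigma> * Yprod \<eta> \<alpha> j (i + n) * ?Vj"
          using covar_X[OF facts, of j "i + n"] ji sig by simp
        moreover have "Yprod \<eta> \<alpha> j (i + n) = ?Y * Yprod \<eta> \<alpha> i (i + n)" using ji by (intro Yprod_split) auto
        ultimately show "covar M (?X (i + n)) (?X j) = (\<sigma> * ?Vj * ?Y) * Yprod \<eta> \<alpha> i (i + n)" by (simp add: mult_ac)
      qed
      have D0: "0 \<le> \<sigma> * ?Vj * ?Y" using \<sigma>_pos Vj0 Y0 by simp
      have Yii0: "\<And>n. 0 \<le> Yprod \<eta> \<alpha> i (i + n)" using Y_nonneg[OF dassm i1] by simp
      have psum: "\<And>N. (\<Sum>n<N. covar M (?X (i + n)) (?X j)) \<le> (\<sigma> * ?Vj * ?Y) * (K4 * real i powr \<alpha>)"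
      proof -
        fix N
        have "(\<Sum>n<N. covar M (?X (i + n)) (?X j)) = (\<sigma> * ?Vj * ?Y) * Ps \<eta> \<alpha> N i"
          unfolding covn Ps_def by (simp add: sum_distrib_left)
        also have "\<dots> \<le> (\<sigma> * ?Vj * ?Y) * (K4 * real i powr \<alpha>)" using Pb[OF i1] D0 by (intro mult_left_mono) auto
        finally show "(\<Sum>n<N. covar M (?X (i + n)) (?X j)) \<le> (\<sigma> * ?Vj * ?Y) * (K4 * real i powr \<alpha>)" .
      qed
      have summ: "summable (\<lambda>n. covar M (?X (i + n)) (?X j))"
      proof (rule bounded_imp_summable)
        show "\<And>n. 0 \<le> covar M (?X (i + n)) (?X j)" unfolding covn using D0 Yii0 by simp
        fix n
        show "(\<Sum>k\<le>n. covar M (?X (i + k)) (?X j)) \<le> (\<sigma> * ?Vj * ?Y) * (K4 * real i powr \<alpha>)"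
          using psum[of "Suc n"] unfolding lessThan_Suc_atMost .
      qed
      show "let X = ?X; A = ?A; B = ?B
         in var M (X i) \<le> C * integral\<^sup>L M (\<lambda>\<omega>. (X i \<omega>)\<^sup>2)
          \<and> integral\<^sup>L M (\<lambda>\<omega>. (X i \<omega>)\<^sup>2) \<le> C * var M (X i)
          \<and> integral\<^sup>L M (\<lambda>\<omega>. (X i \<omega>)\<^sup>2) \<le> C * real i powr (- \<alpha>)
          \<and> real i powr (- \<alpha>) \<le> C * integral\<^sup>L M (\<lambda>\<omega>. (X i \<omega>)\<^sup>2)
          \<and> var M (X i) \<le> C * real i powr (- \<alpha>)
          \<and> real i powr (- \<alpha>) \<le> C * var M (X i)
          \<and> 0 \<le> covar M (X i) (X j)
          \<and> covar M (X i) (X j) \<le> C * (A * real j powr (- \<alpha>))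
          \<and> A * real j powr (- \<alpha>) \<le> C * covar M (X i) (X j)
          \<and> A * real j powr (- \<alpha>) \<le> B * real j powr (- \<alpha>)
          \<and> covar M (X i) (\<lambda>\<omega>. \<Sum>k\<in>{1..j}. X k \<omega>) \<le> C * A
          \<and> A \<le> C * covar M (X i) (\<lambda>\<omega>. \<Sum>k\<in>{1..j}. X k \<omega>)
          \<and> A \<le> B
          \<and> summable (\<lambda>n. covar M (X (i + n)) (X j))
          \<and> (\<Sum>n. covar M (X (i + n)) (X j))
                \<le> C * (A * real i powr \<alpha> * real j powr (- \<alpha>))
          \<and> A * real i powr \<alpha> * real j powr (- \<alpha>)
                \<le> B * real i powr \<alpha> * real j powr (- \<alpha>)"
        unfolding Let_def
      proof (intro conjI)
        show "var M (?X i) \<le> C * integral\<^sup>L M (\<lambda>\<omega>. (?X i \<omega>)\<^sup>2)"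
        proof (rule scale_le[OF _ _ Cge(1)])
          show "0 \<le> integral\<^sup>L M (\<lambda>\<omega>. (?X i \<omega>)\<^sup>2)" using EXge \<sigma>_pos V0 by (smt (verit) mult_nonneg_nonneg)
          show "var M (?X i) \<le> 1 * integral\<^sup>L M (\<lambda>\<omega>. (?X i \<omega>)\<^sup>2)" using varX EXge by simp
        qed
        show "integral\<^sup>L M (\<lambda>\<omega>. (?X i \<omega>)\<^sup>2) \<le> C * var M (?X i)"
          using scale_le[OF _ EXle Cge(2)] varX \<sigma>_pos V0 by simp
        show "integral\<^sup>L M (\<lambda>\<omega>. (?X i \<omega>)\<^sup>2) \<le> C * ?wi"
        proof (rule scale_le[OF wi0 _ Cge(3)])
          have "(1 + r / \<sigma>) * (\<sigma> * ?V) = (\<sigma> + r) * ?V" using \<sigma>_pos by (simp add: field_simps)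
          also have "\<dots> \<le> (\<sigma> + r) * (K1 * ?wi)" using Vi \<sigma>_pos r0 by (intro mult_left_mono) auto
          finally show "integral\<^sup>L M (\<lambda>\<omega>. (?X i \<omega>)\<^sup>2) \<le> (\<sigma> + r) * K1 * ?wi" using EXle by simp
        qed
        have wiV: "?wi \<le> 1 / (\<sigma> * c1) * (\<sigma> * ?V)"
        proof -
          have "\<sigma> * (c1 * ?wi) \<le> \<sigma> * ?V" using Vi \<sigma>_pos by (intro mult_left_mono) auto
          then show ?thesis using \<sigma>_pos pos by (simp add: field_simps)
        qed
        have sV0: "0 \<le> \<sigma> * ?V" using \<sigma>_pos V0 by simp
        have wiC: "?wi \<le> C * (\<sigma> * ?V)" by (rule scale_le[OF sV0 wiV Cge(4)])
        show "?wi \<le> C * integral\<^sup>L M (\<lambda>\<omega>. (?X i \<omega>)\<^sup>2)"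
        proof -
          have "C * (\<sigma> * ?V) \<le> C * integral\<^sup>L M (\<lambda>\<omega>. (?X i \<omega>)\<^sup>2)" using EXge C0 by (intro mult_left_mono) auto
          then show ?thesis using wiC by linarith
        qed
        show "var M (?X i) \<le> C * ?wi"
        proof (rule scale_le[OF wi0 _ Cge(5)])
          have "\<sigma> * ?V \<le> \<sigma> * (K1 * ?wi)" using Vi \<sigma>_pos by (intro mult_left_mono) auto
          then show "var M (?X i) \<le> \<sigma> * K1 * ?wi" using varX by (simp add: mult.assoc)
        qed
        show "?wi \<le> C * var M (?X i)" using wiC varX by simp
        show "0 \<le> covar M (?X i) (?X j)" using covX \<sigma>_pos Y0 Vj0 by simp
        show "covar M (?X i) (?X j) \<le> C * (?A * ?wj)"
        proof (rule scale_le[OF _ _ Cge(7)])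
          have "?Y * ?Vj \<le> (K2 * ?A) * (K1 * ?wj)" using Yji Vj Y0 Vj0 pos by (intro mult_mono) auto
          then have "\<sigma> * (?Y * ?Vj) \<le> \<sigma> * ((K2 * ?A) * (K1 * ?wj))" using \<sigma>_pos by (intro mult_left_mono) auto
          then show "covar M (?X i) (?X j) \<le> \<sigma> * K2 * K1 * (?A * ?wj)" using covX by (simp add: mult_ac)
        qed simp
        show "?A * ?wj \<le> C * covar M (?X i) (?X j)"
        proof (rule scale_le[OF _ _ Cge(6)])
          have "0 \<le> c1 * ?wj" using pos wj0 by simp
          then have "(c2 * ?A) * (c1 * ?wj) \<le> ?Y * ?Vj" by (rule mult_mono[OF Yji(1) Vj(1) Y0])
          then have "\<sigma> * ((c2 * ?A) * (c1 * ?wj)) \<le> \<sigma> * (?Y * ?Vj)" using \<sigma>_pos by (intro mult_left_mono) auto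
          then have "\<sigma> * c1 * c2 * (?A * ?wj) \<le> covar M (?X i) (?X j)" using covX by (simp add: mult_ac)
          then show "?A * ?wj \<le> 1 / (\<sigma> * c1 * c2) * covar M (?X i) (?X j)" using \<sigma>_pos pos by (simp add: field_simps)
          show "0 \<le> covar M (?X i) (?X j)" using covX \<sigma>_pos Y0 Vj0 by simp
        qed
        show "?A * ?wj \<le> ?B * ?wj" using AB by (intro mult_right_mono) auto
        show "covar M (?X i) (\<lambda>\<omega>. \<Sum>k\<in>{1..j}. ?X k \<omega>) \<le> C * ?A"
        proof (rule scale_le[OF A0 _ Cge(8)])
          have "?Y * Ts \<eta> \<alpha> j \<le> (K2 * ?A) * K3" using Yji Tj Y0 pos by (intro mult_mono) auto
          then have "\<sigma> * (?Y * Ts \<eta> \<alpha> j) \<le> \<sigma> * ((K2 * ?A) * K3)" using \<sigma>_pos by (intro mult_left_mono) auto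
          then show "covar M (?X i) (\<lambda>\<omega>. \<Sum>k\<in>{1..j}. ?X k \<omega>) \<le> \<sigma> * K2 * K3 * ?A" using covS by (simp add: mult_ac)
        qed
        show "?A \<le> C * covar M (?X i) (\<lambda>\<omega>. \<Sum>k\<in>{1..j}. ?X k \<omega>)"
        proof (rule scale_le[OF _ _ Cge(9)])
          have "0 \<le> c3" using pos by simp
          then have "(c2 * ?A) * c3 \<le> ?Y * Ts \<eta> \<alpha> j" by (rule mult_mono[OF Yji(1) Tj(1) Y0])
          then have "\<sigma> * ((c2 * ?A) * c3) \<le> \<sigma> * (?Y * Ts \<eta> \<alpha> j)" using \<sigma>_pos by (intro mult_left_mono) auto
          then have "\<sigma> * c2 * c3 * ?A \<le> covar M (?X i) (\<lambda>\<omega>. \<Sum>k\<in>{1..j}. ?X k \<omega>)" using covS by (simp add: mult_ac)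
          then show "?A \<le> 1 / (\<sigma> * c2 * c3) * covar M (?X i) (\<lambda>\<omega>. \<Sum>k\<in>{1..j}. ?X k \<omega>)" using \<sigma>_pos pos by (simp add: field_simps)
          show "0 \<le> covar M (?X i) (\<lambda>\<omega>. \<Sum>k\<in>{1..j}. ?X k \<omega>)" using covS \<sigma>_pos Y0 Tj pos by simp
        qed
        show "?A \<le> ?B" by (rule AB)
        show "summable (\<lambda>n. covar M (?X (i + n)) (?X j))" by (rule summ)
        show "(\<Sum>n. covar M (?X (i + n)) (?X j)) \<le> C * (?A * real i powr \<alpha> * ?wj)"
        proof (rule scale_le[OF _ _ Cge(10)])
          have "(\<Sum>n. covar M (?X (i + n)) (?X j)) \<le> (\<sigma> * ?Vj * ?Y) * (K4 * real i powr \<alpha>)"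
            by (rule suminf_le_const[OF summ psum])
          also have "\<dots> \<le> (\<sigma> * (K1 * ?wj) * (K2 * ?A)) * (K4 * real i powr \<alpha>)"
          proof (rule mult_right_mono)
            have "0 \<le> K1 * ?wj" using pos wj0 by simp
            then have "?Vj * ?Y \<le> (K1 * ?wj) * (K2 * ?A)" by (rule mult_mono[OF Vj(2) Yji(2) _ Y0])
            then have "\<sigma> * (?Vj * ?Y) \<le> \<sigma> * ((K1 * ?wj) * (K2 * ?A))" using \<sigma>_pos by (intro mult_left_mono) auto
            then show "\<sigma> * ?Vj * ?Y \<le> \<sigma> * (K1 * ?wj) * (K2 * ?A)" by (simp add: mult.assoc)
          qed (use pos in simp)
          finally show "(\<Sum>n. covar M (?X (i + n)) (?X j)) \<le> \<sigma> * K1 * K2 * K4 * (?A * real i powr \<alpha> * ?wj)"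
            by (simp add: mult_ac)
        qed simp
        show "?A * real i powr \<alpha> * ?wj \<le> ?B * real i powr \<alpha> * ?wj"
          using AB by (intro mult_right_mono) auto
      qed
    qed
  qed
qed

end
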